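(* In the standing setting, assume (A1), (A3), (A4) and (A7), and consider the coupled chains. Then there exist $h_0>0$ and $C>0$, independent of $s,h,k$, such that for all $s\in\mathbb N_+$, $h\in(0,h_0)$ and all $k\ge1$, $$\mathbb E|X^{f,f}_k-X_k|^4\le C\frac{h^2}{s^2}.$$
   Context: Standing setting. Let $d,n\in\mathbb N_+$, $\beta\ge0$, and let $a:\mathbb R^d\to\mathbb R^d$, $b:\mathbb R^d\times\mathbb R^n\to\mathbb R^d$ be measurable. $|\cdot|$ is the Euclidean norm (Frobenius norm for matrices), $\nabla$ the Jacobian in $x$, $D^\alpha$ the partial derivative in $x$ for a multi-index $\alpha$. For each $s\in\mathbb N_+$ a law on $\mathbb R^n$ is given; a random variable with this law is a drift variable at level $s$ (generically $U^s$), and $\mathbb E[b(x,U^s)]=a(x)$ for all $x$. All constants below are independent of $s,x,y$. (A1) $|a(x)-a(y)|\le L|x-y|$; $\langle x-y,a(x)-a(y)\rangle\le-K|x-y|^2$ with $K>0$; $a\in C^2$ with $|D^\alpha a|\le C_{a^{(|\alpha|)}}$ for $|\alpha|=1,2$. (A2) $\mathbb E|b(x,U^s)-b(y,U^s)|^2\le\bar L^2|x-y|^2$. (A3) $\mathbb E|b(x,U^s)-a(x)|^2\le\sigma_s^2(1+|x|^2)$ with $\sigma_s^2\le\kappa/s$. (A4) $\mathbb E|b(x,U^s)-a(x)|^4\le\sigma^{(4)}_s(1+|x|^4)$ with $\sigma^{(4)}_s\le\kappa/s^2$. (A5) for every $u$, $x\mapsto b(x,u)$ is $C^2$ with $|D^\alpha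 b(x,u)|\le C_{b^{(2)}}$ for $|\alpha|=2$, and $\mathbb E|\nabla b(x,U^s)-\nabla a(x)|^4\le\sigma^{(4)}_s(1+|x|^4)$. (A6) $\mathbb E[D^\alpha b(x,U^s)]=D^\alpha a(x)$ for $|\alpha|\le2$. (A7) $|a(x)|^4\le L_0^{(4)}(1+|x|^4)$. (A8) every drift variable $U^{2s}$ at level $2s$ determines (measurably) two drift variables $U^{2s,1},U^{2s,2}$ at level $s$ with $b(x,U^{2s})=\frac12b(x,U^{2s,1})+\frac12b(x,U^{2s,2})$ for all $x$. Coupled chains. Fix $s\in\mathbb N_+$, $h>0$. Let $(Z_k)_{k\ge1}$ be i.i.d. $N(0,I_d)$, $(U^f_k)_{k\ge0}$ i.i.d. drift variables at level $2s$, and $X_0$ an $\mathbb R^d$-valued random variable with $\mathbb E|X_0|^4<\infty$, all independent; let $U^{f,1}_k,U^{f,2}_k$ be the level-$s$ variables given by (A8). Put $V^f_k=U^f_k$, $V^{c-}_k=U^{f,1}_k$, $V^{c+}_k=U^{f,2}_k$. For $j\in\{f,c-,c+\}$, all chains start at $X_0$: $X^{j,f}_{k+1}=X^{j,f}_k+hb(X^{j,f}_k,V^j_k)+\beta\sqrt hZ_{k+1}$ ($k\ge0$); for even $k\ge0$: $X^{j,c-}_{k+2}=X^{j,c-}_k+2hb(X^{j,c-}_k,V^j_k)+\beta\sqrt h(Z_{k+1}+Z_{k+2})$, $X^{j,c+}_{k+2}=X^{j,c+}_k+2hb(X^{j,c+}_k,V^j_{k+1})+\beta\sqrt h(Z_{k+1}+Z_{k+2})$.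 Exact-drift chains from $X_0$: $X_{k+1}=X_k+ha(X_k)+\beta\sqrt hZ_{k+1}$ and, for even $k$, $X^c_{k+2}=X^c_k+2ha(X^c_k)+\beta\sqrt h(Z_{k+1}+Z_{k+2})$. Averages: $\bar X^{j,c}_k=\frac12(X^{j,c-}_k+X^{j,c+}_k)$, $\bar X^{c,f}_k=\frac12(X^{c-,f}_k+X^{c+,f}_k)$. *)

theory Defs
  imports "HOL-Probability.Probability"
begin

definition std_gaussian_density :: "'a::euclidean_space \<Rightarrow> ennreal" where
  "std_gaussian_density x =
     ennreal ((2 * pi) powr (- real DIM('a) / 2) * exp (- (norm x)\<^sup>2 / 2))"

primrec sgd_chain ::
  "real \<Rightarrow> real \<Rightarrow> ('a::real_normed_vector \<Rightarrow> 'u \<Rightarrow> 'a) \<Rightarrow> ('w \<Rightarrow> 'a)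
    \<Rightarrow> (nat \<Rightarrow> 'w \<Rightarrow> 'a) \<Rightarrow> (nat \<Rightarrow> 'w \<Rightarrow> 'u) \<Rightarrow> nat \<Rightarrow> 'w \<Rightarrow> 'a" where
  "sgd_chain h \<beta> b X0 Z V 0 = X0"
| "sgd_chain h \<beta> b X0 Z V (Suc k) =
     (\<lambda>w. sgd_chain h \<beta> b X0 Z V k w + h *\<^sub>R b (sgd_chain h \<beta> b X0 Z V k w) (V k w)
            + (\<beta> * sqrt h) *\<^sub>R Z (Suc k) w)"

primrec exact_chain ::
  "real \<Rightarrow> real \<Rightarrow> ('a::real_normed_vector \<Rightarrow> 'a) \<Rightarrow> ('w \<Rightarrow> 'a)
    \<Rightarrow> (nat \<Rightarrow> 'w \<Rightarrow> 'a) \<Rightarrow> nat \<Rightarrow> 'w \<Rightarrow> 'a" where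
  "exact_chain h \<beta> a X0 Z 0 = X0"
| "exact_chain h \<beta> a X0 Z (Suc k) =
     (\<lambda>w. exact_chain h \<beta> a X0 Z k w + h *\<^sub>R a (exact_chain h \<beta> a X0 Z k w)
            + (\<beta> * sqrt h) *\<^sub>R Z (Suc k) w)"

text \<open>Index set for the family of independent random inputs: X_0, Z_k (k \<ge> 1), U_k (k \<ge> 0).\<close>
datatype rv_idx = IX0 | IZ nat | IU nat

definition input_sigmas ::
  "'w measure \<Rightarrow> ('w \<Rightarrow> 'a::topological_space) \<Rightarrow> (nat \<Rightarrow> 'w \<Rightarrow> 'a) \<Rightarrow> (nat \<Rightarrow> 'w \<Rightarrow> 'u::topological_space)
    \<Rightarrow> rv_idx \<Rightarrow> 'w set set" where
  "input_sigmas M X0 Z U i = (case i of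
      IX0 \<Rightarrow> sets (vimage_algebra (space M) X0 borel)
    | IZ k \<Rightarrow> sets (vimage_algebra (space M) (Z k) borel)
    | IU k \<Rightarrow> sets (vimage_algebra (space M) (U k) borel))"

definition input_index :: "rv_idx set" where
  "input_index = {IX0} \<union> {IZ k | k. k \<ge> 1} \<union> range IU"

end

theory Submission
  imports Defs
begin

lemma norm_add_sq: "norm (x + y::'a::real_inner)^2 = norm x^2 + 2 * inner x y + norm y^2"
  by (simp add: power2_norm_eq_inner inner_add_left inner_add_right inner_commute)

lemma young_sq: fixes K q B :: real assumes "K > 0" shows "6*B*q \<le> (K/4)*q^2 + 36*B^2/K"
proof -
  have "0 \<le> (K/4) * (q - 12*B/K)^2" using assms by simp
  also have "\<dots> = (K/4)*q^2 - 6*B*q + 36*B^2/K" using assms by (simp add: power2_eq_square field_simps)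
  finally show ?thesis by simp
qed

lemma exact_quart:
  fixes q t h K A :: real
  assumes q: "0 \<le> q" "q \<le> (1 - K*h)*t + h*A" and t: "t \<ge> 0" and A: "A \<ge> 0"
    and K: "K > 0" and h: "h > 0" "h \<le> 1" "K*h \<le> 1"
  shows "q^2 \<le> (1 - 3*K*h/4)*t^2 + h*(A^2 + 4*A^2/K)"
proof -
  have "q^2 \<le> ((1 - K*h)*t + h*A)^2" using q by (simp add: power_mono)
  also have "\<dots> = (1-K*h)^2*t^2 + h*(2*(1-K*h)*A*t) + h^2*A^2" by (simp add: power2_eq_square algebra_simps)
  also have "\<dots> \<le> (1-K*h)*t^2 + h*(2*A*t) + h*A^2"
  proof -
    have "(1-K*h)^2 \<le> 1-K*h" using h K mult_left_le_one_le[of "1-K*h" "1-K*h"] by (simp add: power2_eq_square)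
    hence 1: "(1-K*h)^2*t^2 \<le> (1-K*h)*t^2" by (intro mult_right_mono) auto
    have "(1-K*h)*(2*A*t) \<le> 2*A*t" using h K A t by (intro mult_left_le_one_le) auto
    hence "2*(1-K*h)*A*t \<le> 2*A*t" by (simp add: algebra_simps)
    hence 2: "h*(2*(1-K*h)*A*t) \<le> h*(2*A*t)" using h by simp
    have 3: "h^2*A^2 \<le> h*A^2" using h by (simp add: power2_eq_square mult_right_mono)
    show ?thesis using 1 2 3 by simp
  qed
  also have "\<dots> \<le> (1-K*h)*t^2 + h*((K/4)*t^2 + 4*A^2/K) + h*A^2"
  proof -
    have "2*A*t \<le> (K/4)*t^2 + 4*A^2/K" using young_sq[OF K, of "A/3" t] by (simp add: power2_eq_square field_simps)
    thus ?thesis using h by simp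
  qed
  also have "\<dots> = (1 - 3*K*h/4)*t^2 + h*(A^2 + 4*A^2/K)" by (simp add: algebra_simps)
  finally show ?thesis .
qed

lemma sym_quart:
  fixes m v :: "'a::real_inner"
  shows "norm (m + v)^4 + norm (m - v)^4 \<le> 2 * (norm m^4 + 6 * norm m^2 * norm v^2 + norm v^4)"
proof -
  have e1: "norm (m+v)^2 = norm m^2 + 2*inner m v + norm v^2" by (rule norm_add_sq)
  have e2: "norm (m-v)^2 = norm m^2 - 2*inner m v + norm v^2"
    using norm_add_sq[of m "-v"] by simp
  have cs: "inner m v ^2 \<le> norm m^2 * norm v^2"
    using Cauchy_Schwarz_ineq by (simp add: power2_norm_eq_inner)
  have "norm (m+v)^4 + norm (m-v)^4 = (norm (m+v)^2)^2 + (norm (m-v)^2)^2" by simp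
  also have "\<dots> = 2*(norm m^2 + norm v^2)^2 + 8*(inner m v)^2" unfolding e1 e2 by (simp add: power2_eq_square algebra_simps)
  also have "\<dots> \<le> 2*(norm m^2 + norm v^2)^2 + 8*(norm m^2 * norm v^2)" using cs by simp
  also have "\<dots> = 2 * (norm m^4 + 6 * norm m^2 * norm v^2 + norm v^4)" by (simp add: power2_eq_square algebra_simps power4_eq_xxxx)
  finally show ?thesis .
qed

lemma quart_expand:
  fixes D \<xi> :: "'a::real_inner"
  shows "norm (D + \<xi>)^4 \<le> (norm D^2)^2 + 4*norm D^2 * inner D \<xi> + 8*norm D^2*norm \<xi>^2 + 3*(norm \<xi>^2)^2"
proof -
  define p where "p = norm D^2"
  define w where "w = norm \<xi>^2"
  define r where "r = inner D \<xi>"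
  have p0: "p \<ge> 0" "w \<ge> 0" by (auto simp: p_def w_def)
  have cs: "r^2 \<le> p*w" unfolding r_def p_def w_def
    using Cauchy_Schwarz_ineq by (simp add: power2_norm_eq_inner)
  have "(2*r)^2 \<le> (p+w)^2" using cs p0 zero_le_power2[of "p-w"] by (simp add: power2_eq_square algebra_simps)
  hence "\<bar>2*r\<bar> \<le> p + w" using p0 by (metis abs_le_square_iff abs_of_nonneg add_nonneg_nonneg)
  hence "2*r \<le> p+w" by simp
  hence rw: "2*(2*r)*w \<le> 2*(p+w)*w" using p0 by (simp add: mult_right_mono)
  have "norm (D+\<xi>)^4 = (norm (D+\<xi>)^2)^2" by simp
  also have "\<dots> = (p + 2*r + w)^2" by (simp only: norm_add_sq p_def r_def w_def)
  also have "\<dots> = p^2 + 4*p*r + 4*r^2 + 2*p*w + 2*(2*r)*w + w^2" by (simp add: power2_eq_square algebra_simps)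
  also have "\<dots> \<le> p^2 + 4*p*r + 8*p*w + 3*w^2" using cs rw by (simp add: power2_eq_square algebra_simps)
  finally show ?thesis by (simp add: p_def r_def w_def)
qed


lemma exact_full:
  fixes q t h K A \<beta> m :: real
  assumes q: "0 \<le> q" "q^2 \<le> (1 - 3*K*h/4)*t^2 + h*(A^2 + 4*A^2/K)" and t: "t \<ge> 0" and A: "A \<ge> 0"
    and K: "K > 0" and h: "h > 0" "h \<le> 1" "K*h \<le> 1" and m: "m \<ge> 0"
  shows "q^2 + 6*(\<beta>^2*h)*q*(1+m) + (\<beta>^2*h)^2*m
     \<le> (1 - K*h/2)*t^2 + h*(2*(A^2 + 4*A^2/K) + 36*(\<beta>^2*(1+m))^2/K + \<beta>^4*m)"
proof -
  have y: "6*(\<beta>^2*(1+m))*q \<le> (K/4)*q^2 + 36*(\<beta>^2*(1+m))^2/K" by (rule young_sq[OF K])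
  have 1: "6*(\<beta>^2*h)*q*(1+m) \<le> h*((K/4)*q^2) + h*(36*(\<beta>^2*(1+m))^2/K)"
    using mult_left_mono[OF y, of h] h by (simp add: algebra_simps)
  have 2: "(\<beta>^2*h)^2*m \<le> h*(\<beta>^4*m)"
  proof -
    have "h^2 \<le> h" using h by (simp add: power2_eq_square mult_left_le_one_le)
    hence "h^2*(\<beta>^4*m) \<le> h*(\<beta>^4*m)" using m by (intro mult_right_mono) auto
    thus ?thesis by (simp add: power2_eq_square power4_eq_xxxx algebra_simps)
  qed
  have "(1 + K*h/4)*q^2 \<le> (1 + K*h/4)*((1 - 3*K*h/4)*t^2 + h*(A^2 + 4*A^2/K))"
    using q K h by (intro mult_left_mono) auto
  also have "\<dots> \<le> (1 - K*h/2)*t^2 + h*(2*(A^2 + 4*A^2/K))"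
  proof -
    have "(1 + K*h/4)*(1 - 3*K*h/4) \<le> 1 - K*h/2" using K h by (simp add: algebra_simps power2_eq_square)
    hence a: "(1 + K*h/4)*(1 - 3*K*h/4)*t^2 \<le> (1 - K*h/2)*t^2" by (intro mult_right_mono) auto
    have "(1 + K*h/4) \<le> 2" using h by simp
    moreover have "0 \<le> h*(A^2 + 4*A^2/K)" using h K by simp
    ultimately have b: "(1 + K*h/4)*(h*(A^2 + 4*A^2/K)) \<le> 2*(h*(A^2 + 4*A^2/K))" by (rule mult_right_mono)
    have "(1 + K*h/4)*((1 - 3*K*h/4)*t^2 + h*(A^2 + 4*A^2/K)) = (1 + K*h/4)*(1 - 3*K*h/4)*t^2 + (1 + K*h/4)*(h*(A^2 + 4*A^2/K))"
      by (simp add: algebra_simps)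
    also have "\<dots> \<le> (1 - K*h/2)*t^2 + 2*(h*(A^2 + 4*A^2/K))" using add_mono[OF a b] .
    finally show ?thesis by (simp only: mult.left_commute[of 2 h])
  qed
  finally have 3: "(1 + K*h/4)*q^2 \<le> (1 - K*h/2)*t^2 + h*(2*(A^2 + 4*A^2/K))" .
  show ?thesis using 1 2 3 by (simp add: algebra_simps)
qed

lemma err_full:
  fixes p E X Y h K \<kappa> s :: real
  assumes p: "0 \<le> p" "p \<le> (1 - K*h)*E^2" and E: "E \<ge> 0" and X: "X \<ge> 0" and Y: "0 \<le> Y" "Y \<le> E + X"
    and K: "K > 0" and h: "h > 0" "h \<le> 1" "K*h \<le> 1" and \<kappa>: "\<kappa> \<ge> 0" and s: "s \<ge> 1"
    and hC: "h * (32*(64*\<kappa>^2/K + 3*\<kappa>) + 1) \<le> K"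
  shows "p^2 + 8*p*(h^2*(\<kappa>/s)*(1+Y^2)) + 3*(h^4*(\<kappa>/s^2)*(1+Y^4))
     \<le> (1 - K*h/4)*E^4 + h*(h^2/s^2)*((64*\<kappa>^2/K + 3*\<kappa>)*(1 + 8*X^4))"
proof -
  define C1 where "C1 = 64*\<kappa>^2/K + 3*\<kappa>"
  have C1: "C1 \<ge> 0" using K \<kappa> by (simp add: C1_def)
  define Z where "Z = h^2*(\<kappa>/s)*(1+Y^2)"
  have Kh: "K*h > 0" using K h by simp
  have "6*(4*Z/3)*p \<le> ((2*(K*h))/4)*p^2 + 36*(4*Z/3)^2/(2*(K*h))" by (rule young_sq) (use Kh in simp)
  hence 1: "8*p*Z \<le> (K*h/2)*p^2 + 32*Z^2/(K*h)" by (simp add: power2_eq_square field_simps)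
  have "(1+Y^2)^2 \<le> 2*(1+Y^4)" using zero_le_power2[of "1 - Y^2"] by (simp add: power2_eq_square power4_eq_xxxx algebra_simps)
  hence "32*Z^2/(K*h) = (h^3/s^2)*(32*\<kappa>^2/K)*(1+Y^2)^2" using K h s by (simp add: Z_def power2_eq_square field_simps power3_eq_cube)
  also have "\<dots> \<le> (h^3/s^2)*(32*\<kappa>^2/K)*(2*(1+Y^4))"
    using \<open>(1+Y^2)^2 \<le> 2*(1+Y^4)\<close> K h s by (intro mult_left_mono) auto
  also have "\<dots> = (h^3/s^2)*(64*\<kappa>^2/K)*(1+Y^4)" by simp
  finally have 2: "32*Z^2/(K*h) \<le> (h^3/s^2)*(64*\<kappa>^2/K)*(1+Y^4)" .
  have 3: "3*(h^4*(\<kappa>/s^2)*(1+Y^4)) \<le> (h^3/s^2)*(3*\<kappa>)*(1+Y^4)"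
  proof -
    have "h^4 \<le> h^3" using h by (simp add: power_decreasing)
    hence "h^4*(3*\<kappa>/s^2*(1+Y^4)) \<le> h^3*(3*\<kappa>/s^2*(1+Y^4))" using \<kappa> s by (intro mult_right_mono) auto
    thus ?thesis by (simp add: algebra_simps)
  qed
  have p2: "p^2 \<le> (1-K*h)*E^4"
  proof -
    have "p^2 \<le> ((1 - K*h)*E^2)^2" using p by (simp add: power_mono)
    also have "\<dots> = (1-K*h)^2*E^4" by (simp add: power2_eq_square power4_eq_xxxx)
    also have "\<dots> \<le> (1-K*h)*E^4" using h K mult_left_le_one_le[of "1-K*h" "1-K*h"]
      by (intro mult_right_mono) (auto simp: power2_eq_square)
    finally show ?thesis .
  qed
  have Y4: "Y^4 \<le> 8*E^4 + 8*X^4"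
  proof -
    have "Y^2 \<le> (E+X)^2" using Y by (simp add: power_mono)
    also have "\<dots> \<le> 2*E^2 + 2*X^2" using zero_le_power2[of "E-X"] by (simp add: power2_eq_square algebra_simps)
    finally have y2: "Y^2 \<le> 2*E^2 + 2*X^2" .
    have "Y^4 = (Y^2)^2" by simp
    also have "\<dots> \<le> (2*E^2 + 2*X^2)^2" using y2 by (intro power_mono) auto
    also have "\<dots> \<le> 8*E^4 + 8*X^4" using zero_le_power2[of "E^2-X^2"] by (simp add: power2_eq_square power4_eq_xxxx algebra_simps)
    finally show ?thesis by simp
  qed
  have "p^2 + 8*p*Z + 3*(h^4*(\<kappa>/s^2)*(1+Y^4)) \<le> (1 + K*h/2)*p^2 + (h^3/s^2)*C1*(1+Y^4)"
    using 1 2 3 by (simp add: C1_def algebra_simps)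
  also have "\<dots> \<le> (1 + K*h/2)*((1-K*h)*E^4) + (h^3/s^2)*C1*(1 + 8*E^4 + 8*X^4)"
  proof -
    have a: "(1 + K*h/2)*p^2 \<le> (1 + K*h/2)*((1-K*h)*E^4)" using p2 Kh by (intro mult_left_mono) auto
    have b: "(h^3/s^2)*C1*(1+Y^4) \<le> (h^3/s^2)*C1*(1 + 8*E^4 + 8*X^4)" using Y4 C1 h by (intro mult_left_mono) auto
    show ?thesis using a b by simp
  qed
  also have "\<dots> \<le> (1 - K*h/2)*E^4 + (h^3/s^2)*C1*(8*E^4) + (h^3/s^2)*C1*(1 + 8*X^4)"
  proof -
    have "(1 + K*h/2)*(1-K*h) \<le> 1 - K*h/2" using mult_pos_pos[OF Kh Kh] by (simp add: algebra_simps)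
    hence "(1 + K*h/2)*(1-K*h)*E^4 \<le> (1 - K*h/2)*E^4" by (intro mult_right_mono) auto
    thus ?thesis by (simp add: algebra_simps)
  qed
  also have "\<dots> \<le> (1 - K*h/4)*E^4 + h*(h^2/s^2)*(C1*(1 + 8*X^4))"
  proof -
    have "(h^3/s^2)*C1*8 \<le> K*h/4"
    proof -
      have "h^3/s^2 \<le> h^3" using s h by (simp add: divide_le_eq)
      also have "h^3 \<le> h*h" using h by (simp add: power3_eq_cube mult_left_le_one_le)
      finally have "(h^3/s^2)*(C1*8) \<le> (h*h)*(C1*8)" using C1 by (intro mult_right_mono) auto
      also have "\<dots> \<le> K*h/4"
      proof -
        have "h*(32*C1) \<le> K" using hC h by (simp add: C1_def algebra_simps)
        hence "h*(h*(32*C1)) \<le> h*K" using h by (intro mult_left_mono) auto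
        thus ?thesis by (simp add: algebra_simps)
      qed
      finally show ?thesis by (simp add: algebra_simps)
    qed
    hence "(h^3/s^2)*C1*8*E^4 \<le> K*h/4*E^4" by (intro mult_right_mono) auto
    thus ?thesis by (simp add: algebra_simps power3_eq_cube power2_eq_square)
  qed
  finally show ?thesis by (simp add: Z_def C1_def)
qed

lemma exact_det:
  fixes a :: "'a::euclidean_space \<Rightarrow> 'a"
  assumes lip: "\<forall>x y. norm (a x - a y) \<le> L * norm (x - y)" and L: "L \<ge> 0"
    and mon: "\<forall>x y. inner (x - y) (a x - a y) \<le> - K * (norm (x - y))\<^sup>2" and K: "K > 0"
    and h: "h > 0" "h \<le> 1" "h * (4*L^2+1) \<le> K"
  shows "norm (x + h *\<^sub>R a x)^2 \<le> (1 - K*h) * norm x^2 + h * (2*norm (a 0)^2/K + 2*norm (a 0)^2)"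
proof -
  define r where "r = norm x"
  define a0 where "a0 = norm (a 0)"
  define P where "P = inner x (a x)"
  define N where "N = norm (a x)"
  have r0: "r \<ge> 0" "a0 \<ge> 0" "N \<ge> 0" by (auto simp: r_def a0_def N_def)
  have "inner x (a x - a 0) \<le> - K * r^2" using mon[rule_format, of x 0] by (simp add: r_def)
  moreover have "inner x (a 0) \<le> r * a0" unfolding r_def a0_def by (rule order_trans[OF _ norm_cauchy_schwarz]) simp
  ultimately have P: "P \<le> - K * r^2 + r * a0" by (simp add: P_def inner_diff_right)
  have "N \<le> a0 + L * r" using lip[rule_format, of x 0] norm_triangle_ineq2[of "a x" "a 0"]
    by (simp add: N_def a0_def r_def)
  hence "N^2 \<le> (a0 + L*r)^2" using r0 by (simp add: power_mono)
  also have "\<dots> \<le> 2*a0^2 + 2*L^2*r^2" using zero_le_power2[of "a0 - L*r"]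
    by (simp add: power2_eq_square algebra_simps)
  finally have N2: "N^2 \<le> 2*a0^2 + 2*L^2*r^2" .
  have ar: "2*a0*r \<le> K*r^2/2 + 2*a0^2/K" using young_sq[of "2*K" "a0/3" r] K by (simp add: power2_eq_square field_simps)
  have eq: "norm (x + h *\<^sub>R a x)^2 = r^2 + 2*h*P + h^2*N^2"
    by (simp add: norm_add_sq r_def P_def N_def power_mult_distrib abs_of_pos h(1))
  have "h^2*N^2 \<le> h^2*(2*a0^2 + 2*L^2*r^2)" using N2 by (simp add: mult_left_mono)
  moreover have "2*h*P \<le> 2*h*(- K * r^2 + r * a0)" using P h by simp
  moreover have "h*(2*a0*r) \<le> h*(K*r^2/2 + 2*a0^2/K)" using ar h by (simp add: mult_left_mono)
  moreover have "h^2*(2*L^2*r^2) \<le> h*(K/2)*r^2"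
  proof -
    have "h*(2*L^2) \<le> K/2" using h by (simp add: algebra_simps)
    hence "h*(2*L^2)*r^2 \<le> (K/2)*r^2" by (intro mult_right_mono) auto
    hence "h*(h*(2*L^2)*r^2) \<le> h*((K/2)*r^2)" using h by (intro mult_left_mono) auto
    thus ?thesis by (simp add: power2_eq_square algebra_simps)
  qed
  moreover have "h^2*(2*a0^2) \<le> h*(2*a0^2)" using h by (simp add: power2_eq_square mult_right_mono)
  ultimately show ?thesis unfolding eq by (simp add: algebra_simps r_def[symmetric] a0_def[symmetric])
qed


lemma err_det:
  fixes a :: "'a::euclidean_space \<Rightarrow> 'a"
  assumes lip: "\<forall>x y. norm (a x - a y) \<le> L * norm (x - y)" and L: "L \<ge> 0"
    and mon: "\<forall>x y. inner (x - y) (a x - a y) \<le> - K * (norm (x - y))\<^sup>2"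
    and h: "h > 0" "h * L^2 \<le> K"
  shows "norm ((y - x) + h *\<^sub>R (a y - a x))^2 \<le> (1 - K*h) * norm (y - x)^2"
proof -
  define e where "e = norm (y - x)"
  have 1: "inner (y - x) (a y - a x) \<le> - K * e^2" using mon by (simp add: e_def)
  have "norm (a y - a x) \<le> L * e" using lip by (simp add: e_def)
  hence "norm (a y - a x)^2 \<le> (L*e)^2" by (simp add: power_mono)
  hence 2: "h^2 * norm (a y - a x)^2 \<le> h^2 * (L*e)^2" by (simp add: mult_left_mono)
  have 3: "h^2 * (L*e)^2 \<le> K*h*e^2"
  proof -
    have "h * (h*L^2) * e^2 \<le> h * K * e^2" using h by (intro mult_right_mono mult_left_mono) auto
    thus ?thesis by (simp add: power2_eq_square algebra_simps)
  qed
  have "norm ((y - x) + h *\<^sub>R (a y - a x))^2 = e^2 + 2*h*inner (y - x) (a y - a x) + h^2 * norm (a y - a x)^2"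
    by (simp add: norm_add_sq e_def power_mult_distrib abs_of_pos h(1))
  also have "\<dots> \<le> e^2 + 2*h*(- K * e^2) + K*h*e^2" using 1 2 3 h by (smt (verit) mult_left_mono)
  also have "\<dots> = (1 - K*h) * e^2" by (simp add: algebra_simps)
  finally show ?thesis by (simp add: e_def)
qed


lemma lborel_neg:
  fixes f :: "'a::euclidean_space \<Rightarrow> ennreal"
  assumes f: "f \<in> borel_measurable borel"
  shows "(\<integral>\<^sup>+x. f x \<partial>lborel) = (\<integral>\<^sup>+x. f (-x) \<partial>lborel)"
proof -
  have L: "lborel = density (distr lborel borel (\<lambda>x::'a. - x)) (\<lambda>_. 1)"
    using lborel_affine[of "-1::real" "0::'a"] by simp
  have "(\<integral>\<^sup>+x. f x \<partial>lborel) = (\<integral>\<^sup>+x. f x \<partial>(density (distr lborel borel (\<lambda>x::'a. - x)) (\<lambda>_. 1)))"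
    by (rule arg_cong[where f="\<lambda>M. \<integral>\<^sup>+x. f x \<partial>M"], rule L)
  also have "\<dots> = (\<integral>\<^sup>+x. f x \<partial>(distr lborel borel (\<lambda>x::'a. - x)))"
    by (simp add: density_1)
  also have "\<dots> = (\<integral>\<^sup>+x. f (-x) \<partial>lborel)"
    using f by (subst nn_integral_distr) auto
  finally show ?thesis .
qed

lemma sq_exp_bound: fixes t :: real assumes "t \<ge> 0" shows "t^2 * exp (-t/2) \<le> 64 * exp (-t/4)"
proof -
  have "t/8 \<le> exp (t/8)" using exp_ge_add_one_self[of "t/8"] by linarith
  hence "(t/8)^2 \<le> exp (t/8)^2" using assms by (intro power_mono) auto
  also have "\<dots> = exp (t/4)" by (simp add: power2_eq_square flip: exp_add)
  finally have "t^2 \<le> 64 * exp (t/4)" by (simp add: power2_eq_square)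
  hence "t^2 * exp (-t/2) \<le> 64 * exp (t/4) * exp (-t/2)" by (intro mult_right_mono) auto
  also have "\<dots> = 64 * exp (-t/4)" by (simp flip: exp_add mult.assoc)
  finally show ?thesis .
qed

lemma gauss_meas[measurable]: "std_gaussian_density \<in> borel_measurable borel"
  unfolding std_gaussian_density_def by measurable

lemma gauss_m4:
  assumes one: "(\<integral>\<^sup>+x. std_gaussian_density (x::'a::euclidean_space) \<partial>lborel) = 1"
  shows "(\<integral>\<^sup>+x. std_gaussian_density (x::'a) * ennreal (norm x ^ 4) \<partial>lborel) < \<infinity>"
proof -
  define c :: real where "c = (2 * pi) powr (- real DIM('a) / 2)"
  have c: "c > 0" by (simp add: c_def)
  define G where "G = (\<lambda>y::'a. ennreal (64 * c * exp (- ((norm y)^2) / 4)))"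
  have pt: "std_gaussian_density x * ennreal (norm x ^ 4) \<le> G x" for x :: 'a
  proof -
    have "c * exp (- (norm x)\<^sup>2 / 2) * norm x ^ 4 = c * ((norm x ^2)^2 * exp (-(norm x ^2)/2))"
      by (simp add: algebra_simps)
    also have "\<dots> \<le> c * (64 * exp (-(norm x^2)/4))" using c sq_exp_bound[of "norm x ^2"] by (intro mult_left_mono) auto
    finally show ?thesis unfolding std_gaussian_density_def G_def c_def[symmetric]
      using c by (simp add: ennreal_mult'[symmetric] mult.assoc)
  qed
  have Gm: "G \<in> borel_measurable borel" unfolding G_def by measurable
  have L: "lborel = density (distr lborel borel (\<lambda>x::'a. 0 + sqrt 2 *\<^sub>R x)) (\<lambda>_. \<bar>sqrt 2\<bar> ^ DIM('a))"
    by (rule lborel_affine) simp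
  have "(\<integral>\<^sup>+x. G x \<partial>lborel) = (\<integral>\<^sup>+x. G x \<partial>(density (distr lborel borel (\<lambda>x::'a. 0 + sqrt 2 *\<^sub>R x)) (\<lambda>_. \<bar>sqrt 2\<bar> ^ DIM('a))))"
    by (rule arg_cong[where f="\<lambda>M. \<integral>\<^sup>+x. G x \<partial>M"], rule L)
  also have "\<dots> = (\<integral>\<^sup>+x. ennreal (sqrt 2 ^ DIM('a)) * G x \<partial>(distr lborel borel (\<lambda>x::'a. sqrt 2 *\<^sub>R x)))"
    using Gm by (subst nn_integral_density) (auto simp: ennreal_power)
  also have "\<dots> = (\<integral>\<^sup>+x. ennreal (sqrt 2 ^ DIM('a)) * G (sqrt 2 *\<^sub>R x) \<partial>lborel)"
    using Gm by (subst nn_integral_distr) auto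
  also have "\<dots> = (\<integral>\<^sup>+x. ennreal (64 * sqrt 2 ^ DIM('a)) * std_gaussian_density (x::'a) \<partial>lborel)"
  proof (intro nn_integral_cong)
    fix x :: 'a
    have "(norm (sqrt 2 *\<^sub>R x))^2 / 4 = (norm x)^2 / 2" by (simp add: power_mult_distrib)
    thus "ennreal (sqrt 2 ^ DIM('a)) * G (sqrt 2 *\<^sub>R x) = ennreal (64 * sqrt 2 ^ DIM('a)) * std_gaussian_density x"
      unfolding G_def std_gaussian_density_def c_def
      by (simp add: ennreal_mult'[symmetric] mult_ac del: norm_scaleR)
  qed
  also have "\<dots> = ennreal (64 * sqrt 2 ^ DIM('a))"
    by (subst nn_integral_cmult) (auto simp: one)
  finally have "(\<integral>\<^sup>+x. G x \<partial>lborel) < \<infinity>" by simp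
  moreover have "(\<integral>\<^sup>+x. std_gaussian_density (x::'a) * ennreal (norm x ^ 4) \<partial>lborel) \<le> (\<integral>\<^sup>+x. G x \<partial>lborel)"
    by (rule nn_integral_mono) (rule pt)
  ultimately show ?thesis by (meson le_less_trans)
qed


lemma noise_step:
  fixes \<xi> :: "'u \<Rightarrow> 'a::euclidean_space" and D :: 'a
  assumes P: "prob_space N"
    and \<xi>m: "\<xi> \<in> borel_measurable N" and \<xi>i: "integrable N \<xi>" and \<xi>0: "(\<integral>u. \<xi> u \<partial>N) = 0"
    and W2: "(\<integral>\<^sup>+u. ennreal (norm (\<xi> u)^2) \<partial>N) \<le> ennreal W2"
    and W4: "(\<integral>\<^sup>+u. ennreal (norm (\<xi> u)^4) \<partial>N) \<le> ennreal W4"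
    and W: "W2 \<ge> 0" "W4 \<ge> 0"
  shows "(\<integral>\<^sup>+u. ennreal (norm (D + \<xi> u)^4) \<partial>N) \<le> ennreal ((norm D^2)^2 + 8*norm D^2*W2 + 3*W4)"
proof -
  interpret prob_space N by (rule P)
  define p where "p = norm D^2"
  have p: "p \<ge> 0" by (simp add: p_def)
  define F where "F u = p^2 + 4*p*inner D (\<xi> u) + 8*p*norm (\<xi> u)^2 + 3*(norm (\<xi> u)^2)^2" for u
  have pt: "norm (D + \<xi> u)^4 \<le> F u" for u unfolding F_def p_def by (rule quart_expand)
  have F0: "0 \<le> F u" for u using pt[of u] norm_ge_zero[of "D + \<xi> u"] by (meson order_trans zero_le_power)
  have m2[measurable]: "(\<lambda>u. norm (\<xi> u)^2) \<in> borel_measurable N" using \<xi>m by measurable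
  have m4: "(\<lambda>u. (norm (\<xi> u)^2)^2) \<in> borel_measurable N" using \<xi>m by measurable
  have fin2: "(\<integral>\<^sup>+u. ennreal (norm (\<xi> u)^2) \<partial>N) < \<infinity>" using W2 by (simp add: le_less_trans)
  have fin4: "(\<integral>\<^sup>+u. ennreal ((norm (\<xi> u)^2)^2) \<partial>N) < \<infinity>" using W4 by (simp add: le_less_trans)
  have i2: "integrable N (\<lambda>u. norm (\<xi> u)^2)"
    by (rule integrableI_bounded) (use m2 fin2 in auto)
  have i4: "integrable N (\<lambda>u. (norm (\<xi> u)^2)^2)"
    by (rule integrableI_bounded) (use m4 fin4 in auto)
  have iF: "integrable N F" unfolding F_def using i2 i4 \<xi>i by auto
  have I2: "(\<integral>u. norm (\<xi> u)^2 \<partial>N) \<le> W2"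
  proof -
    have "ennreal (\<integral>u. norm (\<xi> u)^2 \<partial>N) = (\<integral>\<^sup>+u. ennreal (norm (\<xi> u)^2) \<partial>N)"
      by (rule nn_integral_eq_integral[symmetric]) (use i2 in auto)
    also have "\<dots> \<le> ennreal W2" by (rule W2)
    finally show ?thesis using W by (simp add: ennreal_le_iff)
  qed
  have I4: "(\<integral>u. (norm (\<xi> u)^2)^2 \<partial>N) \<le> W4"
  proof -
    have "ennreal (\<integral>u. (norm (\<xi> u)^2)^2 \<partial>N) = (\<integral>\<^sup>+u. ennreal ((norm (\<xi> u)^2)^2) \<partial>N)"
      by (rule nn_integral_eq_integral[symmetric]) (use i4 in auto)
    also have "\<dots> \<le> ennreal W4" using W4 by simp
    finally show ?thesis using W by (simp add: ennreal_le_iff)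
  qed
  have IF: "(\<integral>u. F u \<partial>N) = p^2 + 8*p*(\<integral>u. norm (\<xi> u)^2 \<partial>N) + 3*(\<integral>u. (norm (\<xi> u)^2)^2 \<partial>N)"
    unfolding F_def using i2 i4 \<xi>i \<xi>0 by (simp add: prob_space)
  have "(\<integral>\<^sup>+u. ennreal (norm (D + \<xi> u)^4) \<partial>N) \<le> (\<integral>\<^sup>+u. ennreal (F u) \<partial>N)"
    by (rule nn_integral_mono) (rule ennreal_leI, rule pt)
  also have "\<dots> = ennreal (\<integral>u. F u \<partial>N)"
    by (rule nn_integral_eq_integral) (use iF F0 in auto)
  also have "\<dots> \<le> ennreal ((norm D^2)^2 + 8*norm D^2*W2 + 3*W4)"
  proof (rule ennreal_leI)
    have "8*p*(\<integral>u. norm (\<xi> u)^2 \<partial>N) \<le> 8*p*W2" using I2 p by (intro mult_left_mono) auto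
    thus "(\<integral>u. F u \<partial>N) \<le> (norm D^2)^2 + 8*norm D^2*W2 + 3*W4" unfolding IF using I4 by (simp add: p_def)
  qed
  finally show ?thesis .
qed


lemma gauss_step:
  fixes m :: "'a::euclidean_space" and c M4 :: real
  assumes one: "(\<integral>\<^sup>+x. std_gaussian_density (x::'a) \<partial>lborel) = 1"
    and m4: "(\<integral>\<^sup>+x. std_gaussian_density (x::'a) * ennreal (norm x ^ 4) \<partial>lborel) = ennreal M4"
    and M4: "M4 \<ge> 0"
  shows "(\<integral>\<^sup>+z. std_gaussian_density z * ennreal (norm (m + c *\<^sub>R z) ^ 4) \<partial>lborel)
      \<le> ennreal (norm m^4 + 6*c^2*norm m^2*(1+M4) + c^4*M4)"
proof -
  define g where "g = (std_gaussian_density :: 'a \<Rightarrow> ennreal)"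
  have gm[measurable]: "g \<in> borel_measurable borel" unfolding g_def by simp
  have geven: "g (-z) = g z" for z unfolding g_def std_gaussian_density_def by simp
  define P where "P = norm m^4 + 6*norm m^2*c^2"
  define Q where "Q = 6*norm m^2*c^2 + c^4"
  have PQ: "P \<ge> 0" "Q \<ge> 0" by (auto simp: P_def Q_def)
  define I1 where "I1 = (\<integral>\<^sup>+z. g z * ennreal (norm (m + c *\<^sub>R z) ^ 4) \<partial>lborel)"
  have "I1 = (\<integral>\<^sup>+z. g (-z) * ennreal (norm (m + c *\<^sub>R (-z)) ^ 4) \<partial>lborel)"
    unfolding I1_def by (rule lborel_neg) measurable
  also have "\<dots> = (\<integral>\<^sup>+z. g z * ennreal (norm (m - c *\<^sub>R z) ^ 4) \<partial>lborel)"
    by (simp add: geven)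
  finally have I1': "I1 = (\<integral>\<^sup>+z. g z * ennreal (norm (m - c *\<^sub>R z) ^ 4) \<partial>lborel)" .
  have pt: "norm (m + c *\<^sub>R z) ^ 4 + norm (m - c *\<^sub>R z) ^ 4 \<le> 2 * (P + Q * norm z ^ 4)" for z
  proof -
    have "norm (m + c *\<^sub>R z) ^ 4 + norm (m - c *\<^sub>R z) ^ 4 \<le> 2 * (norm m^4 + 6 * norm m^2 * norm (c *\<^sub>R z)^2 + norm (c *\<^sub>R z)^4)"
      by (rule sym_quart)
    also have "\<dots> = 2 * (norm m^4 + 6 * norm m^2 * c^2 * norm z^2 + c^4 * norm z^4)"
      by (simp add: power_mult_distrib)
    also have "\<dots> \<le> 2 * (norm m^4 + 6 * norm m^2 * c^2 * (1 + norm z^4) + c^4 * norm z^4)"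
    proof -
      have "2*norm z^2 \<le> 1 + norm z^4" using zero_le_power2[of "norm z ^2 - 1"]
        by (simp add: power2_eq_square power4_eq_xxxx algebra_simps)
      moreover have "0 \<le> norm z^2" by simp
      ultimately have "norm z^2 \<le> 1 + norm z^4" by linarith
      hence "6 * norm m^2 * c^2 * norm z^2 \<le> 6 * norm m^2 * c^2 * (1 + norm z^4)"
        by (intro mult_left_mono) auto
      thus ?thesis by simp
    qed
    also have "\<dots> = 2 * (P + Q * norm z ^ 4)" by (simp add: P_def Q_def algebra_simps)
    finally show ?thesis .
  qed
  have "I1 + I1 = (\<integral>\<^sup>+z. g z * ennreal (norm (m + c *\<^sub>R z) ^ 4) + g z * ennreal (norm (m - c *\<^sub>R z) ^ 4) \<partial>lborel)"
    by (subst I1') (unfold I1_def, rule nn_integral_add[symmetric], auto)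
  also have "\<dots> \<le> (\<integral>\<^sup>+z. ennreal (2*P) * g z + ennreal (2*Q) * (g z * ennreal (norm z ^ 4)) \<partial>lborel)"
  proof (rule nn_integral_mono)
    fix z :: 'a
    have "g z * ennreal (norm (m + c *\<^sub>R z) ^ 4) + g z * ennreal (norm (m - c *\<^sub>R z) ^ 4)
        = g z * ennreal (norm (m + c *\<^sub>R z) ^ 4 + norm (m - c *\<^sub>R z) ^ 4)"
      by (simp add: distrib_left ennreal_plus)
    also have "\<dots> \<le> g z * ennreal (2 * (P + Q * norm z ^ 4))"
      by (intro mult_left_mono ennreal_leI pt) auto
    also have "\<dots> = ennreal (2*P) * g z + ennreal (2*Q) * (g z * ennreal (norm z ^ 4))"
    proof -
      have "ennreal (2 * (P + Q * norm z ^ 4)) = ennreal (2*P + (2*Q) * norm z ^ 4)" by (simp add: algebra_simps)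
      also have "\<dots> = ennreal (2*P) + ennreal ((2*Q) * norm z ^ 4)" by (rule ennreal_plus) (use PQ in auto)
      also have "\<dots> = ennreal (2*P) + ennreal (2*Q) * ennreal (norm z ^ 4)" by (subst ennreal_mult) (use PQ in auto)
      finally show ?thesis by (simp add: algebra_simps)
    qed
    finally show "g z * ennreal (norm (m + c *\<^sub>R z) ^ 4) + g z * ennreal (norm (m - c *\<^sub>R z) ^ 4)
        \<le> ennreal (2*P) * g z + ennreal (2*Q) * (g z * ennreal (norm z ^ 4))" .
  qed
  also have "\<dots> = ennreal (2*P) * (\<integral>\<^sup>+z. g z \<partial>lborel) + ennreal (2*Q) * (\<integral>\<^sup>+z. g z * ennreal (norm z ^ 4) \<partial>lborel)"
    by (subst nn_integral_add) (auto simp: nn_integral_cmult)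
  also have "\<dots> = ennreal (2*P) + ennreal (2*Q) * ennreal M4"
    using one m4 unfolding g_def by simp
  also have "\<dots> = ennreal (2*P) + ennreal ((2*Q) * M4)" by (subst ennreal_mult) (use PQ M4 in auto)
  also have "\<dots> = ennreal (2*P + (2*Q) * M4)" by (rule ennreal_plus[symmetric]) (use PQ M4 in auto)
  also have "\<dots> = ennreal 2 * ennreal (P + Q*M4)" by (subst ennreal_mult[symmetric]) (use PQ M4 in \<open>auto simp: algebra_simps\<close>)
  finally have "2 * I1 \<le> 2 * ennreal (P + Q*M4)" by (simp add: mult_2)
  hence "I1 \<le> ennreal (P + Q*M4)" by (subst (asm) ennreal_mult_le_mult_iff) auto
  also have "P + Q*M4 = norm m^4 + 6*c^2*norm m^2*(1+M4) + c^4*M4" by (simp add: P_def Q_def algebra_simps)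
  finally show ?thesis unfolding I1_def g_def .
qed


lemma (in prob_space) indep_nn_int:
  assumes ind: "indep_var S X T Y" and f: "f \<in> borel_measurable (S \<Otimes>\<^sub>M T)"
  shows "(\<integral>\<^sup>+w. f (X w, Y w) \<partial>M) = (\<integral>\<^sup>+x. \<integral>\<^sup>+y. f (x,y) \<partial>distr M T Y \<partial>distr M S X)"
proof -
  have rv: "X \<in> measurable M S" "Y \<in> measurable M T" and eq: "distr M S X \<Otimes>\<^sub>M distr M T Y = distr M (S \<Otimes>\<^sub>M T) (\<lambda>x. (X x, Y x))"
    using ind unfolding indep_var_distribution_eq by auto
  have "(\<integral>\<^sup>+w. f (X w, Y w) \<partial>M) = (\<integral>\<^sup>+z. f z \<partial>distr M (S \<Otimes>\<^sub>M T) (\<lambda>x. (X x, Y x)))"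
    using rv f by (subst nn_integral_distr) auto
  also have "\<dots> = (\<integral>\<^sup>+z. f z \<partial>(distr M S X \<Otimes>\<^sub>M distr M T Y))" by (simp add: eq)
  also have "\<dots> = (\<integral>\<^sup>+x. \<integral>\<^sup>+y. f (x,y) \<partial>distr M T Y \<partial>distr M S X)"
  proof -
    interpret T: prob_space "distr M T Y" by (rule prob_space_distr[OF rv(2)])
    show ?thesis by (rule T.nn_integral_fst[symmetric]) (use f in simp)
  qed
  finally show ?thesis .
qed

lemma (in prob_space) indep_var_from_sets:
  assumes indep: "indep_sets E I"
    and stab: "\<And>i. i \<in> I \<Longrightarrow> Int_stable (E i)"
    and AI: "A \<subseteq> I" and i: "i \<in> I" "i \<notin> A"
    and Epow: "(\<Union>j\<in>A. E j) \<subseteq> Pow (space M)"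
    and X: "X \<in> measurable (sigma (space M) (\<Union>j\<in>A. E j)) S" and Xm: "X \<in> measurable M S"
    and Y: "Y \<in> measurable M T" and Ysets: "\<And>B. B \<in> sets T \<Longrightarrow> Y -` B \<inter> space M \<in> E i"
  shows "indep_var S X T Y"
proof -
  let ?I = "case_bool A {i}"
  have c: "indep_sets (\<lambda>j. sigma_sets (space M) (\<Union>k\<in>?I j. E k)) UNIV"
  proof (rule indep_sets_collect_sigma)
    show "indep_sets E (\<Union>j\<in>UNIV. ?I j)"
      by (rule indep_sets_mono_index[OF _ indep]) (use AI i in \<open>auto split: bool.splits\<close>)
    show "Int_stable (E k)" if "j \<in> UNIV" "k \<in> ?I j" for k j
      using that AI i by (intro stab) (auto split: bool.splits)
    show "disjoint_family_on ?I UNIV"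
      using i by (auto simp: disjoint_family_on_def split: bool.splits)
  qed
  have X1: "sigma_sets (space M) {X -` B \<inter> space M |B. B \<in> sets S} \<subseteq> sigma_sets (space M) (\<Union>k\<in>A. E k)"
  proof (rule sigma_sets_mono, safe)
    fix B assume "B \<in> sets S"
    hence "X -` B \<inter> space (sigma (space M) (\<Union>j\<in>A. E j)) \<in> sets (sigma (space M) (\<Union>j\<in>A. E j))"
      using X by (rule measurable_sets[rotated])
    thus "X -` B \<inter> space M \<in> sigma_sets (space M) (\<Union>k\<in>A. E k)" using Epow by simp
  qed
  have Y1: "sigma_sets (space M) {Y -` B \<inter> space M |B. B \<in> sets T} \<subseteq> sigma_sets (space M) (\<Union>k\<in>{i}. E k)"
    by (rule sigma_sets_mono') (use Ysets in auto)
  show ?thesis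
    unfolding indep_var_eq indep_set_def
  proof (intro conjI Xm Y)
    show "indep_sets (case_bool (sigma_sets (space M) {X -` A \<inter> space M |A. A \<in> sets S})
        (sigma_sets (space M) {Y -` A \<inter> space M |A. A \<in> sets T})) UNIV"
      by (rule indep_sets_mono_sets[OF c]) (use X1 Y1 in \<open>auto split: bool.splits\<close>)
  qed
qed

lemma (in prob_space) indep_nn_int_sets:
  fixes X :: "'a \<Rightarrow> 'b::second_countable_topology" and Y :: "'a \<Rightarrow> 'c::second_countable_topology"
  assumes indep: "indep_sets E I"
    and stab: "\<And>i. i \<in> I \<Longrightarrow> Int_stable (E i)"
    and AI: "A \<subseteq> I" and i: "i \<in> I" "i \<notin> A"
    and Epow: "(\<Union>j\<in>A. E j) \<subseteq> Pow (space M)"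
    and X: "X \<in> borel_measurable (sigma (space M) (\<Union>j\<in>A. E j))" and Xm[measurable]: "X \<in> borel_measurable M"
    and Ym[measurable]: "Y \<in> borel_measurable M" and Ysets: "\<And>B. B \<in> sets borel \<Longrightarrow> Y -` B \<inter> space M \<in> E i"
    and f[measurable]: "f \<in> borel_measurable (borel \<Otimes>\<^sub>M borel)"
  shows "(\<integral>\<^sup>+w. f (X w, Y w) \<partial>M) = (\<integral>\<^sup>+x. \<integral>\<^sup>+y. f (x,y) \<partial>distr M borel Y \<partial>distr M borel X)"
proof -
  define X' where "X' = (\<lambda>w. (X w, undefined::'c))"
  define Y' where "Y' = (\<lambda>w. (undefined::'b, Y w))"
  have "X' \<in> measurable M (borel \<Otimes>\<^sub>M borel)" unfolding X'_def by measurable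
  hence X'm: "X' \<in> borel_measurable M" by (simp add: borel_prod)
  have "Y' \<in> measurable M (borel \<Otimes>\<^sub>M borel)" unfolding Y'_def by measurable
  hence Y'm: "Y' \<in> borel_measurable M" by (simp add: borel_prod)
  have [measurable]: "X \<in> borel_measurable (sigma (space M) (\<Union>j\<in>A. E j))" by (rule X)
  have "X' \<in> measurable (sigma (space M) (\<Union>j\<in>A. E j)) (borel \<Otimes>\<^sub>M borel)" unfolding X'_def by measurable
  hence X'A: "X' \<in> borel_measurable (sigma (space M) (\<Union>j\<in>A. E j))" by (simp add: borel_prod)
  have iv: "indep_var borel X' borel Y'"
  proof (rule indep_var_from_sets[OF indep stab AI i Epow X'A X'm Y'm])
    fix B :: "('b \<times> 'c) set" assume B: "B \<in> sets borel"
    have "(\<lambda>y::'c. (undefined::'b, y)) \<in> measurable borel (borel \<Otimes>\<^sub>M borel)" by measurable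
    hence pm: "(\<lambda>y::'c. (undefined::'b, y)) \<in> borel_measurable borel" by (simp add: borel_prod)
    have "(\<lambda>y::'c. (undefined::'b, y)) -` B \<inter> space borel \<in> sets borel" by (rule measurable_sets[OF pm B])
    hence "Y -` ((\<lambda>y::'c. (undefined::'b, y)) -` B) \<inter> space M \<in> E i" by (intro Ysets) simp
    moreover have "Y' -` B \<inter> space M = Y -` ((\<lambda>y::'c. (undefined::'b, y)) -` B) \<inter> space M" by (auto simp: Y'_def)
    ultimately show "Y' -` B \<inter> space M \<in> E i" by simp
  qed auto
  define F where "F = (\<lambda>(p::'b \<times> 'c, q::'b \<times> 'c). f (fst p, snd q))"
  have [measurable]: "(\<lambda>p::'b\<times>'c. fst p) \<in> borel_measurable borel" "(\<lambda>p::'b\<times>'c. snd p) \<in> borel_measurable borel"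
    by (intro borel_measurable_continuous_onI continuous_intros)+
  have Fm: "F \<in> borel_measurable (borel \<Otimes>\<^sub>M borel)" unfolding F_def by measurable
  interpret DY: prob_space "distr M borel Y" by (rule prob_space_distr) simp
  have H: "(\<lambda>x. \<integral>\<^sup>+y. f (x,y) \<partial>distr M borel Y) \<in> borel_measurable borel" by measurable
  have "(\<integral>\<^sup>+w. f (X w, Y w) \<partial>M) = (\<integral>\<^sup>+w. F (X' w, Y' w) \<partial>M)" by (simp add: F_def X'_def Y'_def)
  also have "\<dots> = (\<integral>\<^sup>+p. \<integral>\<^sup>+q. F (p,q) \<partial>distr M borel Y' \<partial>distr M borel X')"
    by (rule indep_nn_int[OF iv Fm])
  also have "\<dots> = (\<integral>\<^sup>+p. \<integral>\<^sup>+y. f (fst p, y) \<partial>distr M borel Y \<partial>distr M borel X')"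
  proof (rule nn_integral_cong)
    fix p :: "'b \<times> 'c"
    have "(\<integral>\<^sup>+q. F (p,q) \<partial>distr M borel Y') = (\<integral>\<^sup>+w. f (fst p, Y w) \<partial>M)"
      using Y'm by (subst nn_integral_distr) (auto simp: F_def Y'_def)
    also have "\<dots> = (\<integral>\<^sup>+y. f (fst p, y) \<partial>distr M borel Y)"
      by (subst nn_integral_distr) auto
    finally show "(\<integral>\<^sup>+q. F (p,q) \<partial>distr M borel Y') = (\<integral>\<^sup>+y. f (fst p, y) \<partial>distr M borel Y)" .
  qed
  also have "\<dots> = (\<integral>\<^sup>+w. \<integral>\<^sup>+y. f (X w, y) \<partial>distr M borel Y \<partial>M)"
    using X'm H by (subst nn_integral_distr) (auto simp: X'_def)
  also have "\<dots> = (\<integral>\<^sup>+x. \<integral>\<^sup>+y. f (x,y) \<partial>distr M borel Y \<partial>distr M borel X)"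
    using H by (subst nn_integral_distr) auto
  finally show ?thesis .
qed

lemma meas_sigmaI:
  fixes V :: "'x \<Rightarrow> 'b::topological_space"
  assumes iA: "i \<in> A" and pow: "(\<Union>j\<in>A. E j) \<subseteq> Pow \<Omega>"
    and pre: "\<And>B. B \<in> sets borel \<Longrightarrow> V -` B \<inter> \<Omega> \<in> E i"
  shows "V \<in> borel_measurable (sigma \<Omega> (\<Union>j\<in>A. E j))"
proof (rule measurableI)
  fix B :: "'b set" assume "B \<in> sets borel"
  hence "V -` B \<inter> \<Omega> \<in> (\<Union>j\<in>A. E j)" using pre iA by auto
  thus "V -` B \<inter> space (sigma \<Omega> (\<Union>j\<in>A. E j)) \<in> sets (sigma \<Omega> (\<Union>j\<in>A. E j))"
    using pow by auto
qed auto

lemma input_sigmas_pow: "(\<Union>j\<in>A. input_sigmas M X0 Z U j) \<subseteq> Pow (space M)"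
  unfolding input_sigmas_def by (auto split: rv_idx.splits) (metis in_mono sets.sets_into_space space_vimage_algebra)+

lemma input_sigmas_pre:
  "B \<in> sets borel \<Longrightarrow> X0 -` B \<inter> space M \<in> input_sigmas M X0 Z U IX0"
  "B \<in> sets borel \<Longrightarrow> Z k -` B \<inter> space M \<in> input_sigmas M X0 Z U (IZ k)"
  "B' \<in> sets borel \<Longrightarrow> U k -` B' \<inter> space M \<in> input_sigmas M X0 Z U (IU k)"
  unfolding input_sigmas_def by (auto simp: sets_vimage_algebra2)

lemma input_sigmas_stable: "Int_stable (input_sigmas M X0 Z U i)"
  unfolding input_sigmas_def Int_stable_def by (auto split: rv_idx.splits)

definition Ak :: "nat \<Rightarrow> rv_idx set" where
  "Ak k = {IX0} \<union> {IZ j | j. 1 \<le> j \<and> j \<le> k} \<union> {IU j | j. j < k}"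

lemma b_comp:
  fixes b :: "'a::second_countable_topology \<Rightarrow> 'u::second_countable_topology \<Rightarrow> 'c::topological_space"
  assumes bm: "(\<lambda>(x, u). b x u) \<in> borel_measurable borel"
    and f: "f \<in> measurable N borel" and g: "g \<in> measurable N borel"
  shows "(\<lambda>w. b (f w) (g w)) \<in> borel_measurable N"
proof -
  have bm': "(\<lambda>(x, u). b x u) \<in> borel_measurable (borel \<Otimes>\<^sub>M borel)" using bm by (simp add: borel_prod)
  have "(\<lambda>(x, u). b x u) \<circ> (\<lambda>w. (f w, g w)) \<in> borel_measurable N"
    by (rule measurable_comp[OF measurable_Pair[OF f g] bm'])
  thus ?thesis by (simp add: comp_def)
qed

lemma chains_meas:
  fixes b :: "'a::euclidean_space \<Rightarrow> 'u::euclidean_space \<Rightarrow> 'a"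
  assumes bm: "(\<lambda>(x, u). b x u) \<in> borel_measurable borel" and am: "a \<in> borel_measurable borel"
  shows "Ak k \<subseteq> A \<Longrightarrow> sgd_chain h \<beta> b X0 Z U k \<in> borel_measurable (sigma (space M) (\<Union>j\<in>A. input_sigmas M X0 Z U j))
     \<and> exact_chain h \<beta> a X0 Z k \<in> borel_measurable (sigma (space M) (\<Union>j\<in>A. input_sigmas M X0 Z U j))"
proof (induction k)
  case 0
  have "X0 \<in> borel_measurable (sigma (space M) (\<Union>j\<in>A. input_sigmas M X0 Z U j))"
    by (rule meas_sigmaI[where i=IX0]) (use 0 in \<open>auto simp: Ak_def input_sigmas_pow input_sigmas_pre\<close>)
  thus ?case by simp
next
  case (Suc k)
  have "Ak k \<subseteq> A" using Suc.prems by (auto simp: Ak_def)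
  with Suc.IH have ih[measurable]: "sgd_chain h \<beta> b X0 Z U k \<in> borel_measurable (sigma (space M) (\<Union>j\<in>A. input_sigmas M X0 Z U j))"
    "exact_chain h \<beta> a X0 Z k \<in> borel_measurable (sigma (space M) (\<Union>j\<in>A. input_sigmas M X0 Z U j))" by auto
  have [measurable]: "U k \<in> borel_measurable (sigma (space M) (\<Union>j\<in>A. input_sigmas M X0 Z U j))"
    by (rule meas_sigmaI[where i="IU k"]) (use Suc.prems in \<open>auto simp: Ak_def input_sigmas_pow input_sigmas_pre\<close>)
  have [measurable]: "Z (Suc k) \<in> borel_measurable (sigma (space M) (\<Union>j\<in>A. input_sigmas M X0 Z U j))"
    by (rule meas_sigmaI[where i="IZ (Suc k)"]) (use Suc.prems in \<open>auto simp: Ak_def input_sigmas_pow input_sigmas_pre\<close>)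
  have [measurable]: "a \<in> borel_measurable borel" by (rule am)
  have "(\<lambda>w. b (sgd_chain h \<beta> b X0 Z U k w) (U k w)) \<in> borel_measurable (sigma (space M) (\<Union>j\<in>A. input_sigmas M X0 Z U j))"
    by (rule b_comp[OF bm]) measurable
  note [measurable] = this
  show ?case by simp
qed


lemma (in prob_space) nn_lin3:
  assumes f: "f \<in> borel_measurable M" "\<And>w. f w \<ge> 0" and g: "g \<in> borel_measurable M" "\<And>w. g w \<ge> 0"
    and abc: "a \<ge> 0" "c \<ge> 0" "b \<ge> 0"
  shows "(\<integral>\<^sup>+w. ennreal (a * f w + c * g w + b) \<partial>M)
     = ennreal a * (\<integral>\<^sup>+w. ennreal (f w) \<partial>M) + ennreal c * (\<integral>\<^sup>+w. ennreal (g w) \<partial>M) + ennreal b"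
proof -
  have "(\<integral>\<^sup>+w. ennreal (a * f w + c * g w + b) \<partial>M) = (\<integral>\<^sup>+w. ennreal a * ennreal (f w) + ennreal c * ennreal (g w) + ennreal b \<partial>M)"
    using f g abc by (intro nn_integral_cong) (simp add: ennreal_plus ennreal_mult)
  also have "\<dots> = (\<integral>\<^sup>+w. ennreal a * ennreal (f w) + ennreal c * ennreal (g w) \<partial>M) + (\<integral>\<^sup>+w. ennreal b \<partial>M)"
    using f g by (intro nn_integral_add) auto
  also have "\<dots> = ennreal a * (\<integral>\<^sup>+w. ennreal (f w) \<partial>M) + ennreal c * (\<integral>\<^sup>+w. ennreal (g w) \<partial>M) + ennreal b"
    using f g by (subst nn_integral_add) (auto simp: nn_integral_cmult emeasure_space_1)
  finally show ?thesis .
qed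

lemma lin_step:
  fixes I I' J :: ennreal
  assumes "I' \<le> ennreal a * I + ennreal c * J + ennreal b" "I \<le> ennreal B" "J \<le> ennreal B2"
    "0 \<le> a" "0 \<le> b" "0 \<le> c" "0 \<le> B" "0 \<le> B2" "a*B + c*B2 + b \<le> B'"
  shows "I' \<le> ennreal B'"
proof -
  have "ennreal a * I \<le> ennreal a * ennreal B" using assms by (intro mult_left_mono) auto
  moreover have "ennreal c * J \<le> ennreal c * ennreal B2" using assms by (intro mult_left_mono) auto
  ultimately have "I' \<le> ennreal a * ennreal B + ennreal c * ennreal B2 + ennreal b"
    using assms(1) by (meson add_mono order_trans order_refl)
  also have "\<dots> = ennreal (a*B + c*B2 + b)" using assms by (simp add: ennreal_plus ennreal_mult)
  also have "\<dots> \<le> ennreal B'" using assms by (intro ennreal_leI) auto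
  finally show ?thesis .
qed

lemma chains_measM:
  fixes b :: "'a::euclidean_space \<Rightarrow> 'u::euclidean_space \<Rightarrow> 'a"
  assumes bm: "(\<lambda>(x, u). b x u) \<in> borel_measurable borel" and am[measurable]: "a \<in> borel_measurable borel"
    and X0[measurable]: "X0 \<in> borel_measurable M" and U: "\<And>j. U j \<in> borel_measurable M"
    and Z: "\<And>j. j \<ge> 1 \<Longrightarrow> Z j \<in> borel_measurable M"
  shows "sgd_chain h \<beta> b X0 Z U k \<in> borel_measurable M \<and> exact_chain h \<beta> a X0 Z k \<in> borel_measurable M"
proof (induction k)
  case 0 thus ?case by simp
next
  case (Suc k)
  hence [measurable]: "sgd_chain h \<beta> b X0 Z U k \<in> borel_measurable M" "exact_chain h \<beta> a X0 Z k \<in> borel_measurable M" by auto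
  have [measurable]: "U k \<in> borel_measurable M" "Z (Suc k) \<in> borel_measurable M" using U Z by auto
  have [measurable]: "(\<lambda>w. b (sgd_chain h \<beta> b X0 Z U k w) (U k w)) \<in> borel_measurable M"
    by (rule b_comp[OF bm]) measurable
  show ?case by simp
qed


theorem lemma8:
  fixes a :: "'a::euclidean_space \<Rightarrow> 'a"
    and b :: "'a \<Rightarrow> 'u::euclidean_space \<Rightarrow> 'a"
    and \<mu> :: "nat \<Rightarrow> 'u measure"
    and \<nu> :: "'a measure"
    and \<beta> :: real
  assumes beta: "\<beta> \<ge> 0"
    and b_meas: "(\<lambda>(x, u). b x u) \<in> borel_measurable borel"
    and a_meas: "a \<in> borel_measurable borel"
    and law: "\<And>s. s \<ge> 1 \<Longrightarrow> prob_space (\<mu> s) \<and> sets (\<mu> s) = sets borel"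
    and unbiased: "\<And>s x. s \<ge> 1 \<Longrightarrow> integrable (\<mu> s) (b x) \<and> (\<integral>u. b x u \<partial>\<mu> s) = a x"
    \<comment> \<open>(A1)\<close>
    and A1_lip: "\<exists>L. \<forall>x y. norm (a x - a y) \<le> L * norm (x - y)"
    and A1_mon: "\<exists>K>0. \<forall>x y. inner (x - y) (a x - a y) \<le> - K * (norm (x - y))\<^sup>2"
    and A1_C2: "\<exists>Da D2a Ca1 Ca2.
        (\<forall>x. (a has_derivative Da x) (at x))
      \<and> (\<forall>x v. ((\<lambda>y. Da y v) has_derivative D2a x v) (at x))
      \<and> (\<forall>v w. continuous_on UNIV (\<lambda>x. D2a x v w))
      \<and> (\<forall>x. \<forall>i\<in>Basis. norm (Da x i) \<le> Ca1)
      \<and> (\<forall>x. \<forall>i\<in>Basis. \<forall>j\<in>Basis. norm (D2a x i j) \<le> Ca2)"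
    \<comment> \<open>(A3) and (A4), with a common constant kappa\<close>
    and A34: "\<exists>\<kappa> \<sigma>2 \<sigma>4.
        (\<forall>s\<ge>1. \<sigma>2 s \<le> \<kappa> / real s \<and> \<sigma>4 s \<le> \<kappa> / (real s)\<^sup>2)
      \<and> (\<forall>s\<ge>1. \<forall>x. (\<integral>\<^sup>+u. ennreal ((norm (b x u - a x))\<^sup>2) \<partial>\<mu> s)
                        \<le> ennreal (\<sigma>2 s * (1 + (norm x)\<^sup>2)))
      \<and> (\<forall>s\<ge>1. \<forall>x. (\<integral>\<^sup>+u. ennreal ((norm (b x u - a x)) ^ 4) \<partial>\<mu> s)
                        \<le> ennreal (\<sigma>4 s * (1 + (norm x) ^ 4)))"
    \<comment> \<open>(A7)\<close>
    and A7: "\<exists>L04. \<forall>x. (norm (a x)) ^ 4 \<le> L04 * (1 + (norm x) ^ 4)"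
    \<comment> \<open>law of the initial value X_0, with finite fourth moment\<close>
    and init_law: "prob_space \<nu>" "sets \<nu> = sets borel"
    and init_moment: "(\<integral>\<^sup>+x. ennreal ((norm x) ^ 4) \<partial>\<nu>) < \<infinity>"
  shows "\<exists>h0>0. \<exists>C>0. \<forall>s::nat. \<forall>h::real. \<forall>k::nat.
     \<forall>(M::'w measure) X0 Z U.
       s \<ge> 1 \<longrightarrow> 0 < h \<longrightarrow> h < h0 \<longrightarrow> k \<ge> 1 \<longrightarrow>
       prob_space M \<longrightarrow>
       X0 \<in> borel_measurable M \<longrightarrow> distr M borel X0 = \<nu> \<longrightarrow>
       (\<forall>j\<ge>1. distributed M lborel (Z j) std_gaussian_density) \<longrightarrow>
       (\<forall>j. U j \<in> borel_measurable M \<and> distr M borel (U j) = \<mu> (2 * s)) \<longrightarrow>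
       prob_space.indep_sets M (input_sigmas M X0 Z U) input_index \<longrightarrow>
       (\<integral>\<^sup>+w. ennreal ((norm (sgd_chain h \<beta> b X0 Z U k w - exact_chain h \<beta> a X0 Z k w)) ^ 4) \<partial>M)
         \<le> ennreal (C * h\<^sup>2 / (real s)\<^sup>2)"
proof -
  obtain L0 where lip0: "\<forall>x y. norm (a x - a y) \<le> L0 * norm (x - y)" using A1_lip by blast
  define L where "L = max L0 0"
  have L0: "L \<ge> 0" by (simp add: L_def)
  have lip: "\<forall>x y. norm (a x - a y) \<le> L * norm (x - y)"
  proof (intro allI)
    fix x y :: 'a
    have "L0 * norm (x - y) \<le> L * norm (x - y)" by (intro mult_right_mono) (auto simp: L_def)
    thus "norm (a x - a y) \<le> L * norm (x - y)" using lip0 by (meson order_trans)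
  qed
  obtain K where K: "K > 0" and mon: "\<forall>x y. inner (x - y) (a x - a y) \<le> - K * (norm (x - y))\<^sup>2"
    using A1_mon by blast
  obtain \<kappa>0 \<sigma>2 \<sigma>4 where sig: "\<forall>s\<ge>1. \<sigma>2 s \<le> \<kappa>0 / real s \<and> \<sigma>4 s \<le> \<kappa>0 / (real s)\<^sup>2"
    and A3: "\<forall>s\<ge>1. \<forall>x. (\<integral>\<^sup>+u. ennreal ((norm (b x u - a x))\<^sup>2) \<partial>\<mu> s) \<le> ennreal (\<sigma>2 s * (1 + (norm x)\<^sup>2))"
    and A4: "\<forall>s\<ge>1. \<forall>x. (\<integral>\<^sup>+u. ennreal ((norm (b x u - a x)) ^ 4) \<partial>\<mu> s) \<le> ennreal (\<sigma>4 s * (1 + (norm x) ^ 4))"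
    using A34 by blast
  define \<kappa> where "\<kappa> = max \<kappa>0 0"
  have \<kappa>0: "\<kappa> \<ge> 0" by (simp add: \<kappa>_def)
  define g :: "'a \<Rightarrow> ennreal" where "g = std_gaussian_density"
  define m0 where "m0 = enn2real (\<integral>\<^sup>+x. ennreal (norm x ^ 4) \<partial>\<nu>)"
  define M4 where "M4 = enn2real (\<integral>\<^sup>+x. g x * ennreal (norm x ^ 4) \<partial>lborel)"
  define a0 where "a0 = norm (a 0)"
  define Aa where "Aa = 2*a0^2/K + 2*a0^2"
  define Bx where "Bx = 2*(Aa^2 + 4*Aa^2/K) + 36*(\<beta>^2*(1+M4))^2/K + \<beta>^4*M4"
  define Mx where "Mx = m0 + 2*Bx/K"
  define C1 where "C1 = 64*\<kappa>^2/K + 3*\<kappa>"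
  define D where "D = 4*C1*(1+8*Mx)/K"
  define Cc where "Cc = D + 1"
  define h0 where "h0 = min 1 (min (1/K) (min (K/(4*L^2+1)) (K/(32*C1+1))))"
  have m00: "m0 \<ge> 0" and M40: "M4 \<ge> 0" by (simp_all add: m0_def M4_def)
  have Aa0: "Aa \<ge> 0" using K by (simp add: Aa_def)
  have Bx0: "Bx \<ge> 0" using K M40 Aa0 by (simp add: Bx_def)
  have Mx0: "Mx \<ge> 0" using m00 Bx0 K by (simp add: Mx_def)
  have C10: "C1 \<ge> 0" using K \<kappa>0 by (simp add: C1_def)
  have D0: "D \<ge> 0" using K C10 Mx0 by (simp add: D_def)
  show ?thesis
  proof (rule exI[of _ h0], rule conjI)
    have "0 < 4*L^2+1" by (simp add: add_nonneg_pos)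
    thus "h0 > 0" using K C10 by (simp add: h0_def add_pos_nonneg)
  next
   show "\<exists>C>0. \<forall>s h k. \<forall>(M::'w measure) X0 Z U. s \<ge> 1 \<longrightarrow> 0 < h \<longrightarrow> h < h0 \<longrightarrow> k \<ge> 1 \<longrightarrow>
       prob_space M \<longrightarrow>
       X0 \<in> borel_measurable M \<longrightarrow> distr M borel X0 = \<nu> \<longrightarrow>
       (\<forall>j\<ge>1. distributed M lborel (Z j) std_gaussian_density) \<longrightarrow>
       (\<forall>j. U j \<in> borel_measurable M \<and> distr M borel (U j) = \<mu> (2 * s)) \<longrightarrow>
       prob_space.indep_sets M (input_sigmas M X0 Z U) input_index \<longrightarrow>
       (\<integral>\<^sup>+w. ennreal ((norm (sgd_chain h \<beta> b X0 Z U k w - exact_chain h \<beta> a X0 Z k w)) ^ 4) \<partial>M)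
         \<le> ennreal (C * h\<^sup>2 / (real s)\<^sup>2)"
   proof (rule exI[of _ Cc], intro conjI allI impI)
    show "Cc > 0" using D0 by (simp add: Cc_def)
    fix s :: nat and h :: real and k :: nat and M :: "'w measure" and X0 Z U
    assume s1: "s \<ge> 1" and hpos: "0 < h" and hh0: "h < h0" and k1: "k \<ge> 1" and PM: "prob_space M"
      and X0m: "X0 \<in> borel_measurable M" and X0d: "distr M borel X0 = \<nu>"
      and Zd: "\<forall>j\<ge>1. distributed M lborel (Z j) std_gaussian_density"
      and Uh: "\<forall>j. U j \<in> borel_measurable M \<and> distr M borel (U j) = \<mu> (2 * s)"
      and ind: "prob_space.indep_sets M (input_sigmas M X0 Z U) input_index"
    interpret prob_space M by (rule PM)
    have hlt: "h < 1" "h < 1/K" "h < K/(4*L^2+1)" "h < K/(32*C1+1)" using hh0 by (auto simp: h0_def)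
    have h1: "h \<le> 1" using hlt by simp
    have Kh: "K*h \<le> 1" using hlt(2) K by (simp add: field_simps)
    have hL4: "h*(4*L^2+1) \<le> K"
    proof -
      have "0 < 4*L^2+1" by (simp add: add_nonneg_pos)
      thus ?thesis using hlt(3) by (simp add: pos_less_divide_eq less_imp_le)
    qed
    have hC: "h*(32*C1+1) \<le> K"
    proof -
      have "0 < 32*C1+1" using C10 by simp
      thus ?thesis using hlt(4) by (simp add: pos_less_divide_eq less_imp_le)
    qed
    have hL: "h * L^2 \<le> K" using hL4 hpos by (smt (verit) mult_left_mono zero_le_power2 distrib_left)
    have s2: "1 \<le> 2 * s" using s1 by simp
    have Zm: "\<And>j. j \<ge> 1 \<Longrightarrow> Z j \<in> borel_measurable M" using Zd by (simp add: distributed_def)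
    have Um: "\<And>j. U j \<in> borel_measurable M" and Ud: "\<And>j. distr M borel (U j) = \<mu> (2 * s)" using Uh by auto
    have meas: "sgd_chain h \<beta> b X0 Z U j \<in> borel_measurable M \<and> exact_chain h \<beta> a X0 Z j \<in> borel_measurable M" for j
      by (rule chains_measM[OF b_meas a_meas X0m Um Zm])
    have Zdist: "distr M borel (Z j) = density lborel g" if "j \<ge> 1" for j
    proof -
      have "distr M borel (Z j) = distr M lborel (Z j)" by (rule distr_cong) auto
      thus ?thesis using Zd that by (simp add: distributed_def g_def)
    qed
    have one: "(\<integral>\<^sup>+x. g x \<partial>lborel) = 1"
    proof -
      have "prob_space (distr M borel (Z 1))" by (rule prob_space_distr) (use Zm[of 1] in simp)
      hence "prob_space (density lborel g)" using Zdist[of 1] by simp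
      hence "emeasure (density lborel g) (space (density lborel g)) = 1" by (rule prob_space.emeasure_space_1)
      thus ?thesis by (simp add: emeasure_density g_def)
    qed
    have m4: "(\<integral>\<^sup>+x. g x * ennreal (norm x ^ 4) \<partial>lborel) = ennreal M4"
      using gauss_m4[OF one[unfolded g_def]] unfolding M4_def g_def by simp
    have m0: "(\<integral>\<^sup>+x. ennreal (norm x ^ 4) \<partial>\<nu>) = ennreal m0"
      using init_moment unfolding m0_def by (simp add: less_top)
    have idx: "Ak j \<subseteq> input_index" "IZ (Suc j) \<in> input_index" "IZ (Suc j) \<notin> Ak j"
      "IU j \<in> input_index" "IU j \<notin> Ak j" for j
      by (auto simp: Ak_def input_index_def)
    have chA: "sgd_chain h \<beta> b X0 Z U j \<in> borel_measurable (sigma (space M) (\<Union>i\<in>Ak j. input_sigmas M X0 Z U i))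
       \<and> exact_chain h \<beta> a X0 Z j \<in> borel_measurable (sigma (space M) (\<Union>i\<in>Ak j. input_sigmas M X0 Z U i))" for j
      using chains_meas[OF b_meas a_meas, of j "Ak j"] by simp
    have mom: "(\<integral>\<^sup>+w. ennreal (norm (exact_chain h \<beta> a X0 Z j w) ^ 4) \<partial>M) \<le> ennreal Mx" for j
    proof (induction j)
      case 0
      have "(\<integral>\<^sup>+w. ennreal (norm (exact_chain h \<beta> a X0 Z 0 w) ^ 4) \<partial>M) = (\<integral>\<^sup>+x. ennreal (norm x ^ 4) \<partial>distr M borel X0)"
        using X0m by (subst nn_integral_distr) auto
      also have "\<dots> = ennreal m0" using m0 X0d by simp
      also have "\<dots> \<le> ennreal Mx" using Bx0 K by (intro ennreal_leI) (simp add: Mx_def)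
      finally show ?case .
    next
      case (Suc j)
      let ?X = "exact_chain h \<beta> a X0 Z j"
      have Xm[measurable]: "?X \<in> borel_measurable M" using meas by blast
      have Zj[measurable]: "Z (Suc j) \<in> borel_measurable M" using Zm by simp
      have iv: "indep_var borel ?X borel (Z (Suc j))"
      proof (rule indep_var_from_sets[OF ind input_sigmas_stable idx(1) idx(2) idx(3) input_sigmas_pow])
        show "?X \<in> borel_measurable (sigma (space M) (\<Union>i\<in>Ak j. input_sigmas M X0 Z U i))" using chA by blast
      qed (auto intro: input_sigmas_pre)
      define F where "F = (\<lambda>(x::'a, z::'a). ennreal (norm (x + h *\<^sub>R a x + (\<beta> * sqrt h) *\<^sub>R z) ^ 4))"
      have Fm: "F \<in> borel_measurable (borel \<Otimes>\<^sub>M borel)" unfolding F_def using a_meas by measurable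
      have "(\<integral>\<^sup>+w. ennreal (norm (exact_chain h \<beta> a X0 Z (Suc j) w) ^ 4) \<partial>M) = (\<integral>\<^sup>+w. F (?X w, Z (Suc j) w) \<partial>M)"
        by (simp add: F_def)
      also have "\<dots> = (\<integral>\<^sup>+x. \<integral>\<^sup>+z. F (x,z) \<partial>distr M borel (Z (Suc j)) \<partial>distr M borel ?X)"
        by (rule indep_nn_int[OF iv Fm])
      also have "\<dots> \<le> (\<integral>\<^sup>+x. ennreal ((1 - K*h/2) * norm x ^ 4 + 0 * norm x ^ 4 + h*Bx) \<partial>distr M borel ?X)"
      proof (rule nn_integral_mono)
        fix x :: 'a
        define m where "m = x + h *\<^sub>R a x"
        define q where "q = norm m ^ 2"
        define t where "t = norm x ^ 2"
        have "(\<integral>\<^sup>+z. F (x,z) \<partial>distr M borel (Z (Suc j))) = (\<integral>\<^sup>+z. g z * F (x,z) \<partial>lborel)"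
          using Fm by (simp add: Zdist nn_integral_density g_def)
        also have "\<dots> = (\<integral>\<^sup>+z. std_gaussian_density z * ennreal (norm (m + (\<beta> * sqrt h) *\<^sub>R z) ^ 4) \<partial>lborel)"
          by (simp add: F_def g_def m_def add.assoc)
        also have "\<dots> \<le> ennreal (norm m^4 + 6*(\<beta> * sqrt h)^2*norm m^2*(1+M4) + (\<beta> * sqrt h)^4*M4)"
          by (rule gauss_step[OF one[unfolded g_def] m4[unfolded g_def] M40])
        also have "\<dots> = ennreal (q^2 + 6*(\<beta>^2*h)*q*(1+M4) + (\<beta>^2*h)^2*M4)"
        proof -
          have "sqrt h ^ 4 = (sqrt h ^ 2) ^ 2" by (simp flip: power_mult)
          also have "\<dots> = h^2" using hpos by simp
          finally have sq4: "sqrt h ^ 4 = h^2" .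
          show ?thesis using hpos sq4 by (simp add: q_def power_mult_distrib algebra_simps flip: power_mult)
        qed
        also have "\<dots> \<le> ennreal ((1 - K*h/2) * norm x ^ 4 + 0 * norm x ^ 4 + h*Bx)"
        proof (rule ennreal_leI)
          have q1: "q \<le> (1 - K*h)*t + h*Aa"
            using exact_det[OF lip L0 mon K hpos h1 hL4] by (simp add: q_def t_def m_def Aa_def a0_def)
          have q2: "q^2 \<le> (1 - 3*K*h/4)*t^2 + h*(Aa^2 + 4*Aa^2/K)"
            by (rule exact_quart[OF _ q1 _ Aa0 K hpos h1 Kh]) (auto simp: q_def t_def)
          have "q^2 + 6*(\<beta>^2*h)*q*(1+M4) + (\<beta>^2*h)^2*M4 \<le> (1 - K*h/2)*t^2 + h*Bx"
            unfolding Bx_def by (rule exact_full[OF _ q2 _ Aa0 K hpos h1 Kh M40]) (auto simp: q_def t_def)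
          thus "q^2 + 6*(\<beta>^2*h)*q*(1+M4) + (\<beta>^2*h)^2*M4 \<le> (1 - K*h/2) * norm x ^ 4 + 0 * norm x ^ 4 + h*Bx"
            by (simp add: t_def flip: power_mult)
        qed
        finally show "(\<integral>\<^sup>+z. F (x,z) \<partial>distr M borel (Z (Suc j))) \<le> ennreal ((1 - K*h/2) * norm x ^ 4 + 0 * norm x ^ 4 + h*Bx)" .
      qed
      also have "\<dots> = (\<integral>\<^sup>+w. ennreal ((1 - K*h/2) * norm (?X w) ^ 4 + 0 * norm (?X w) ^ 4 + h*Bx) \<partial>M)"
        by (subst nn_integral_distr) auto
      also have "\<dots> = ennreal (1 - K*h/2) * (\<integral>\<^sup>+w. ennreal (norm (?X w) ^ 4) \<partial>M) + ennreal 0 * (\<integral>\<^sup>+w. ennreal (norm (?X w) ^ 4) \<partial>M) + ennreal (h*Bx)"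
        by (rule nn_lin3) (use Kh Bx0 hpos in auto)
      finally have st: "(\<integral>\<^sup>+w. ennreal (norm (exact_chain h \<beta> a X0 Z (Suc j) w) ^ 4) \<partial>M)
          \<le> ennreal (1 - K*h/2) * (\<integral>\<^sup>+w. ennreal (norm (?X w) ^ 4) \<partial>M) + ennreal 0 * (\<integral>\<^sup>+w. ennreal (norm (?X w) ^ 4) \<partial>M) + ennreal (h*Bx)" .
      show ?case
      proof (rule lin_step[OF st Suc.IH Suc.IH])
        have "h*Bx \<le> K*h/2*Mx"
        proof -
          have "h*Bx = K*h/2*(2*Bx/K)" using K by simp
          also have "\<dots> \<le> K*h/2*Mx" using K hpos m00 by (intro mult_left_mono) (auto simp: Mx_def)
          finally show ?thesis .
        qed
        thus "(1 - K*h/2)*Mx + 0*Mx + h*Bx \<le> Mx" by (simp add: algebra_simps)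
      qed (use Kh Bx0 hpos Mx0 in auto)
    qed
    have Pr: "prob_space (\<mu> (2 * s))" and Ps: "sets (\<mu> (2 * s)) = sets borel" using law[OF s2] by auto
    have kap2: "\<sigma>2 (2 * s) \<le> \<kappa> / real s" "\<sigma>4 (2 * s) \<le> \<kappa> / (real s)^2"
    proof -
      have a: "\<sigma>2 (2 * s) \<le> \<kappa>0 / real (2 * s)" "\<sigma>4 (2 * s) \<le> \<kappa>0 / (real (2 * s))^2" using sig[rule_format, OF s2] by auto
      have "\<kappa>0 / real (2 * s) \<le> \<kappa> / real s" using s1 by (simp add: \<kappa>_def field_simps)
      moreover have "\<kappa>0 / (real (2 * s))^2 \<le> \<kappa> / (real s)^2" using s1 by (simp add: \<kappa>_def field_simps power2_eq_square)
      ultimately show "\<sigma>2 (2 * s) \<le> \<kappa> / real s" "\<sigma>4 (2 * s) \<le> \<kappa> / (real s)^2" using a by auto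
    qed
    have err: "(\<integral>\<^sup>+w. ennreal (norm (sgd_chain h \<beta> b X0 Z U j w - exact_chain h \<beta> a X0 Z j w) ^ 4) \<partial>M)
       \<le> ennreal (D * h^2 / (real s)^2)" for j
    proof (induction j)
      case 0 thus ?case by simp
    next
      case (Suc j)
      let ?Y = "sgd_chain h \<beta> b X0 Z U j" and ?X = "exact_chain h \<beta> a X0 Z j"
      define P where "P = (\<lambda>w. (?Y w, ?X w))"
      have [measurable]: "(\<lambda>p::'a\<times>'a. fst p) \<in> borel_measurable borel" "(\<lambda>p::'a\<times>'a. snd p) \<in> borel_measurable borel"
        by (intro borel_measurable_continuous_onI continuous_intros)+
      have Ym[measurable]: "?Y \<in> borel_measurable M" and Xm[measurable]: "?X \<in> borel_measurable M" using meas by auto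
      have Pm: "P \<in> borel_measurable M"
        using measurable_Pair[OF Ym Xm] unfolding P_def by (simp add: borel_prod)
      have PA: "P \<in> borel_measurable (sigma (space M) (\<Union>i\<in>Ak j. input_sigmas M X0 Z U i))"
      proof -
        have "P \<in> measurable (sigma (space M) (\<Union>i\<in>Ak j. input_sigmas M X0 Z U i)) (borel \<Otimes>\<^sub>M borel)"
          unfolding P_def by (rule measurable_Pair) (use chA[of j] in auto)
        thus ?thesis by (simp add: borel_prod)
      qed
      define G where "G = (\<lambda>p::('a \<times> 'a) \<times> 'u. ennreal (norm ((fst (fst p) - snd (fst p)) + h *\<^sub>R (b (fst (fst p)) (snd p) - a (snd (fst p)))) ^ 4))"
      have Gm: "G \<in> borel_measurable (borel \<Otimes>\<^sub>M borel)"
      proof -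
        have [measurable]: "(\<lambda>p::('a \<times> 'a) \<times> 'u. b (fst (fst p)) (snd p)) \<in> borel_measurable (borel \<Otimes>\<^sub>M borel)"
          by (rule b_comp[OF b_meas]) measurable
        have [measurable]: "a \<in> borel_measurable borel" by (rule a_meas)
        show ?thesis unfolding G_def by measurable
      qed
      define a1 where "a1 = 1 - K*h/4"
      define c1 where "c1 = 8*h*(h^2/(real s)^2)*C1"
      define b1 where "b1 = h*(h^2/(real s)^2)*C1"
      have abc: "a1 \<ge> 0" "c1 \<ge> 0" "b1 \<ge> 0" using Kh hpos C10 by (auto simp: a1_def c1_def b1_def)
      have "(\<integral>\<^sup>+w. ennreal (norm (sgd_chain h \<beta> b X0 Z U (Suc j) w - exact_chain h \<beta> a X0 Z (Suc j) w) ^ 4) \<partial>M)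
          = (\<integral>\<^sup>+w. G (P w, U j w) \<partial>M)"
        by (intro nn_integral_cong) (simp add: G_def P_def algebra_simps scaleR_diff_right)
      also have "\<dots> = (\<integral>\<^sup>+p. \<integral>\<^sup>+u. G (p,u) \<partial>distr M borel (U j) \<partial>distr M borel P)"
        by (rule indep_nn_int_sets[OF ind input_sigmas_stable idx(1) idx(4) idx(5) input_sigmas_pow PA Pm Um _ Gm])
          (auto intro: input_sigmas_pre)
      also have "\<dots> \<le> (\<integral>\<^sup>+p. ennreal (a1 * norm (fst p - snd p) ^ 4 + c1 * norm (snd p) ^ 4 + b1) \<partial>distr M borel P)"
      proof (rule nn_integral_mono)
        fix p :: "'a \<times> 'a"
        obtain y x where p: "p = (y, x)" by (cases p)
        define Dv where "Dv = (y - x) + h *\<^sub>R (a y - a x)"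
        define \<xi> where "\<xi> = (\<lambda>u. h *\<^sub>R (b y u - a y))"
        define W2 where "W2 = h^2*(\<kappa>/real s)*(1 + norm y^2)"
        define W4 where "W4 = h^4*(\<kappa>/(real s)^2)*(1 + norm y^4)"
        have W: "W2 \<ge> 0" "W4 \<ge> 0" using \<kappa>0 by (auto simp: W2_def W4_def)
        interpret N: prob_space "\<mu> (2 * s)" by (rule Pr)
        have bym: "b y \<in> borel_measurable (\<mu> (2 * s))"
        proof -
          have "(\<lambda>u. b ((\<lambda>u. y) u) (id u)) \<in> borel_measurable borel"
            by (rule b_comp[OF b_meas]) auto
          thus ?thesis using Ps by (simp cong: measurable_cong_sets)
        qed
        have \<xi>m: "\<xi> \<in> borel_measurable (\<mu> (2 * s))" unfolding \<xi>_def using bym by measurable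
        have bi: "integrable (\<mu> (2 * s)) (b y)" and ba: "(\<integral>u. b y u \<partial>\<mu> (2 * s)) = a y" using unbiased[OF s2] by auto
        have \<xi>i: "integrable (\<mu> (2 * s)) \<xi>" unfolding \<xi>_def using bi by auto
        have \<xi>0: "(\<integral>u. \<xi> u \<partial>\<mu> (2 * s)) = 0" unfolding \<xi>_def using bi ba by (simp add: N.prob_space)
        have W2b: "(\<integral>\<^sup>+u. ennreal (norm (\<xi> u)^2) \<partial>\<mu> (2 * s)) \<le> ennreal W2"
        proof -
          have "(\<integral>\<^sup>+u. ennreal (norm (\<xi> u)^2) \<partial>\<mu> (2 * s)) = (\<integral>\<^sup>+u. ennreal (h^2) * ennreal ((norm (b y u - a y))\<^sup>2) \<partial>\<mu> (2 * s))"
            using hpos by (intro nn_integral_cong) (simp add: \<xi>_def power_mult_distrib ennreal_mult)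
          also have "\<dots> = ennreal (h^2) * (\<integral>\<^sup>+u. ennreal ((norm (b y u - a y))\<^sup>2) \<partial>\<mu> (2 * s))"
            using bym by (subst nn_integral_cmult) auto
          also have "\<dots> \<le> ennreal (h^2) * ennreal (\<sigma>2 (2 * s) * (1 + (norm y)\<^sup>2))"
            using A3 s2 by (intro mult_left_mono) auto
          also have "\<dots> \<le> ennreal (h^2) * ennreal ((\<kappa>/real s) * (1 + (norm y)\<^sup>2))"
            using kap2 by (intro mult_left_mono ennreal_leI mult_right_mono) auto
          also have "\<dots> = ennreal (h^2 * ((\<kappa>/real s) * (1 + (norm y)\<^sup>2)))" using \<kappa>0 by (intro ennreal_mult[symmetric]) auto
          also have "\<dots> = ennreal W2" by (simp add: W2_def mult.assoc)
          finally show ?thesis .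
        qed
        have W4b: "(\<integral>\<^sup>+u. ennreal (norm (\<xi> u)^4) \<partial>\<mu> (2 * s)) \<le> ennreal W4"
        proof -
          have "(\<integral>\<^sup>+u. ennreal (norm (\<xi> u)^4) \<partial>\<mu> (2 * s)) = (\<integral>\<^sup>+u. ennreal (h^4) * ennreal ((norm (b y u - a y))^4) \<partial>\<mu> (2 * s))"
            using hpos by (intro nn_integral_cong) (simp add: \<xi>_def power_mult_distrib ennreal_mult)
          also have "\<dots> = ennreal (h^4) * (\<integral>\<^sup>+u. ennreal ((norm (b y u - a y))^4) \<partial>\<mu> (2 * s))"
            using bym by (subst nn_integral_cmult) auto
          also have "\<dots> \<le> ennreal (h^4) * ennreal (\<sigma>4 (2 * s) * (1 + (norm y)^4))"
            using A4 s2 by (intro mult_left_mono) auto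
          also have "\<dots> \<le> ennreal (h^4) * ennreal ((\<kappa>/(real s)^2) * (1 + (norm y)^4))"
            using kap2 by (intro mult_left_mono ennreal_leI mult_right_mono) auto
          also have "\<dots> = ennreal (h^4 * ((\<kappa>/(real s)^2) * (1 + (norm y)^4)))" using \<kappa>0 by (intro ennreal_mult[symmetric]) auto
          also have "\<dots> = ennreal W4" by (simp add: W4_def mult.assoc)
          finally show ?thesis .
        qed
        have "(\<integral>\<^sup>+u. G (p,u) \<partial>distr M borel (U j)) = (\<integral>\<^sup>+u. ennreal (norm (Dv + \<xi> u)^4) \<partial>\<mu> (2 * s))"
          unfolding Ud p by (intro nn_integral_cong) (simp add: G_def Dv_def \<xi>_def algebra_simps scaleR_diff_right)
        also have "\<dots> \<le> ennreal ((norm Dv^2)^2 + 8*norm Dv^2*W2 + 3*W4)"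
          by (rule noise_step[OF Pr \<xi>m \<xi>i \<xi>0 W2b W4b W])
        also have "\<dots> \<le> ennreal (a1 * norm (fst p - snd p) ^ 4 + c1 * norm (snd p) ^ 4 + b1)"
        proof (rule ennreal_leI)
          have pD: "norm Dv^2 \<le> (1 - K*h) * norm (y - x)^2"
            unfolding Dv_def by (rule err_det[OF lip L0 mon hpos hL])
          have Yb: "norm y \<le> norm (y - x) + norm x" using norm_triangle_ineq[of "y - x" x] by simp
          have "(norm Dv^2)^2 + 8*(norm Dv^2)*(h^2*(\<kappa>/real s)*(1+norm y^2)) + 3*(h^4*(\<kappa>/(real s)^2)*(1+norm y^4))
              \<le> (1 - K*h/4)*norm (y - x)^4 + h*(h^2/(real s)^2)*((64*\<kappa>^2/K + 3*\<kappa>)*(1 + 8*norm x^4))"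
            by (rule err_full[OF _ pD _ _ _ Yb K hpos h1 Kh \<kappa>0 _ hC[unfolded C1_def]]) (use s1 in auto)
          moreover have "(norm Dv^2)^2 + 8*norm Dv^2*W2 + 3*W4 = (norm Dv^2)^2 + 8*(norm Dv^2)*(h^2*(\<kappa>/real s)*(1+norm y^2)) + 3*(h^4*(\<kappa>/(real s)^2)*(1+norm y^4))"
            by (simp add: W2_def W4_def)
          moreover have "a1 * norm (fst p - snd p) ^ 4 + c1 * norm (snd p) ^ 4 + b1 = (1 - K*h/4)*norm (y - x)^4 + h*(h^2/(real s)^2)*((64*\<kappa>^2/K + 3*\<kappa>)*(1 + 8*norm x^4))"
            using K s1 by (simp add: p a1_def b1_def c1_def C1_def field_simps)
          ultimately show "(norm Dv^2)^2 + 8*norm Dv^2*W2 + 3*W4 \<le> a1 * norm (fst p - snd p) ^ 4 + c1 * norm (snd p) ^ 4 + b1"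
            by simp
        qed
        finally show "(\<integral>\<^sup>+u. G (p,u) \<partial>distr M borel (U j)) \<le> ennreal (a1 * norm (fst p - snd p) ^ 4 + c1 * norm (snd p) ^ 4 + b1)" .
      qed
      also have "\<dots> = (\<integral>\<^sup>+w. ennreal (a1 * norm (?Y w - ?X w) ^ 4 + c1 * norm (?X w) ^ 4 + b1) \<partial>M)"
        using Pm by (subst nn_integral_distr) (auto simp: P_def)
      also have "\<dots> = ennreal a1 * (\<integral>\<^sup>+w. ennreal (norm (?Y w - ?X w) ^ 4) \<partial>M) + ennreal c1 * (\<integral>\<^sup>+w. ennreal (norm (?X w) ^ 4) \<partial>M) + ennreal b1"
        by (rule nn_lin3) (use abc in auto)
      finally have st: "(\<integral>\<^sup>+w. ennreal (norm (sgd_chain h \<beta> b X0 Z U (Suc j) w - exact_chain h \<beta> a X0 Z (Suc j) w) ^ 4) \<partial>M)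
          \<le> ennreal a1 * (\<integral>\<^sup>+w. ennreal (norm (?Y w - ?X w) ^ 4) \<partial>M) + ennreal c1 * (\<integral>\<^sup>+w. ennreal (norm (?X w) ^ 4) \<partial>M) + ennreal b1" .
      show ?case
      proof (rule lin_step[OF st Suc.IH mom])
        show "a1 * (D * h^2 / (real s)^2) + c1 * Mx + b1 \<le> D * h^2 / (real s)^2"
          using K s1 by (simp add: a1_def b1_def c1_def D_def field_simps)
      qed (use abc D0 Mx0 in auto)
    qed
    have "D * h^2 \<le> Cc * h^2" by (intro mult_right_mono) (auto simp: Cc_def)
    hence "D * h^2 / (real s)^2 \<le> Cc * h\<^sup>2 / (real s)\<^sup>2" by (intro divide_right_mono) auto
    thus "(\<integral>\<^sup>+w. ennreal ((norm (sgd_chain h \<beta> b X0 Z U k w - exact_chain h \<beta> a X0 Z k w)) ^ 4) \<partial>M)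
         \<le> ennreal (Cc * h\<^sup>2 / (real s)\<^sup>2)" using err[of k] by (meson ennreal_leI order_trans)
   qed
  qed
qed


end
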